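(* Let $I\lhd K[x_1,\ldots,x_n]$, let $\pi:\mathbb{R}^n\to\mathbb{R}^{m+1}$ be a rational projection, $l=n-m-1$, and fix $v^{(1)},\ldots,v^{(l)}\in\mathbb{Z}^n$ spanning $\ker\pi$. Let $f_1,\ldots,f_{n-m}\in K[x_1,\ldots,x_n]$, $Y=\bigcap_{i=1}^{n-m}\mathcal{T}(f_i)\subseteq\mathbb{R}^n$ and $\tilde Y=\bigcap_{i=1}^{n-m}\mathcal{T}(\tilde f_i)\subseteq\mathbb{R}^{n+l}$. Then: (a) if the intersection $Y$ is proper, then $\tilde Y$ is proper; (b) if the intersection $Y$ is transversal, then $\tilde Y$ is transversal; (c) if $f_1,\ldots,f_{n-m}$ are Newton-nondegenerate, then $\tilde f_1,\ldots,\tilde f_{n-m}$ are Newton-nondegenerate; (d) if the intersection $Y$ is complete, then $\tilde Y$ is complete.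
   Context: $K$ is a field with a real valuation $\mathrm{val}:K\to\mathbb{R}\cup\{\infty\}$, extended to an algebraic closure $\bar K$. For a (Laurent) polynomial $f=\sum_\alpha c_\alpha x^\alpha$ over $K$ in $N$ variables, its tropical hypersurface is $\mathcal{T}(f)=\{w\in\mathbb{R}^N:\ \min_\alpha(\mathrm{val}(c_\alpha)+\alpha\cdot w)\text{ is attained at least twice}\}$; for an ideal $I$, $\mathcal{T}(I)=\bigcap_{f\in I}\mathcal{T}(f)$. $\mathrm{New}(f)$ is the convex hull of the support of $f$; $\mathcal{T}(f)$ is dual to the regular subdivision of $\mathrm{New}(f)$ induced by lifting each exponent $\alpha$ to height $\mathrm{val}(c_\alpha)$ and projecting the lower faces; a cell $C$ of $\mathcal{T}(f)$ has a dual cell $C^\vee$ in this subdivision. A rational projection $\pi:\mathbb{R}^n\to\mathbb{R}^{m+1}$ is $x\mapsto Ax$ with a rational $(m+1)\times n$ matrix $A$ of rank $m+1$. For $f\in K[x_1,\ldots,x_n]$, $\tilde f:=f\big(x_1\prod_{j=1}^l\lambda_j^{v^{(j)}_1},\ldots,x_n\prod_{j=1}^l\lambda_j^{v^{(j)}_n}\big)\in K[x_1,\ldots,x_n,\lambda_1^{\pm1},\ldots,\lambda_l^{\pm1}]$, whose tropical hypersurface lives in $\mathbb{R}^{n+l}$. For $f_1,\ldots,f_k$ in $N$ variables let $Y_i=\mathcal{T}(f_i)$, $Y=Y_1\cap\cdots\cap Y_k$, $U=Y_1\cup\cdots\cup Y_k=\mathcal{T}(f_1\cdots f_k)$. The intersection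 is proper if $\dim Y=N-k$. For a nonempty cell $C$ of a proper intersection, write $C=\bigcap_i C_i$ with $C_i$ the minimal cell of $Y_i$ containing $C$; the dual cell of $C$ as a cell of $U$ is $C^\vee=C_1^\vee+\cdots+C_k^\vee$, and $Y$ is transversal along $C$ if $\dim C^\vee=\sum_i\dim C_i^\vee$. $Y$ is transversal if for every $J\subseteq\{1,\ldots,k\}$ with $|J|\ge2$ the intersection $\bigcap_{j\in J}Y_j$ is proper and transversal along each of its cells. A proper intersection is complete if $\mathcal{T}(\langle f_1,\ldots,f_k\rangle)=\bigcap_i\mathcal{T}(f_i)$. The polynomials $f_1,\ldots,f_k$ are Newton-nondegenerate if for every choice of faces $A_i\subseteq\mathrm{New}(f_i)$ such that $A_1+\cdots+A_k$ is a face of $\mathrm{New}(f_1)+\cdots+\mathrm{New}(f_k)$ of dimension at most $k-1$, the restrictions $f_i|_{A_i}$ (sum of terms of $f_i$ with exponents in $A_i$) have no common zero in $(\bar K^* )^N$. *)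

theory Defs
  imports "HOL-Analysis.Analysis" "HOL-Library.Function_Algebras" "HOL-Library.Poly_Mapping"
    "HOL-Computational_Algebra.Polynomial"
begin

section \<open>Real vector space structure on functions (points of R^N are functions nat => real
  vanishing from index N on)\<close>

instantiation "fun" :: (type, real_vector) real_vector
begin
definition scaleR_fun :: "real \<Rightarrow> ('a \<Rightarrow> 'b) \<Rightarrow> 'a \<Rightarrow> 'b" where
  "scaleR_fun r f = (\<lambda>x. r *\<^sub>R f x)"
instance by standard (auto simp: scaleR_fun_def fun_eq_iff scaleR_add_right scaleR_add_left)
end

section \<open>Laurent polynomials: finitely supported maps from exponent vectors to coefficients.
  Variable i is x_(i+1) (0-based).\<close>

type_synonym 'a lpoly = "(nat \<Rightarrow>\<^sub>0 int) \<Rightarrow>\<^sub>0 'a"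

definition rspace :: "nat \<Rightarrow> (nat \<Rightarrow> real) set" where
  "rspace N = {w. \<forall>i\<ge>N. w i = 0}"

text \<open>The ring K[x_0..x_(p-1), x_p^(+-1)..x_(N-1)^(+-1)]: membership predicate.
  With p = N this is the polynomial ring K[x_0..x_(N-1)].\<close>
definition lpoly_in :: "nat \<Rightarrow> nat \<Rightarrow> 'a::zero lpoly \<Rightarrow> bool" where
  "lpoly_in p N f \<longleftrightarrow> (\<forall>\<alpha>\<in>Poly_Mapping.keys f. (\<forall>i<p. 0 \<le> Poly_Mapping.lookup \<alpha> i) \<and> (\<forall>i\<ge>N. Poly_Mapping.lookup \<alpha> i = 0))"

definition expvec :: "(nat \<Rightarrow>\<^sub>0 int) \<Rightarrow> nat \<Rightarrow> real" where
  "expvec \<alpha> = (\<lambda>i. real_of_int (Poly_Mapping.lookup \<alpha> i))"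

definition dotp :: "nat \<Rightarrow> (nat \<Rightarrow>\<^sub>0 int) \<Rightarrow> (nat \<Rightarrow> real) \<Rightarrow> real" where
  "dotp N \<alpha> w = (\<Sum>i<N. real_of_int (Poly_Mapping.lookup \<alpha> i) * w i)"

definition tw :: "('a::zero \<Rightarrow> real) \<Rightarrow> nat \<Rightarrow> 'a lpoly \<Rightarrow> (nat \<Rightarrow> real) \<Rightarrow> (nat \<Rightarrow>\<^sub>0 int) \<Rightarrow> real" where
  "tw val N f w \<alpha> = val (Poly_Mapping.lookup f \<alpha>) + dotp N \<alpha> w"

text \<open>Tropical hypersurface T(f) in R^N (convention: T(0) = R^N).\<close>
definition trop_hyp :: "('a::zero \<Rightarrow> real) \<Rightarrow> nat \<Rightarrow> 'a lpoly \<Rightarrow> (nat \<Rightarrow> real) set" where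
  "trop_hyp val N f = {w \<in> rspace N. f = 0 \<or>
     (\<exists>\<alpha>\<in>Poly_Mapping.keys f. \<exists>\<beta>\<in>Poly_Mapping.keys f. \<alpha> \<noteq> \<beta> \<and> tw val N f w \<alpha> = tw val N f w \<beta> \<and>
        (\<forall>\<gamma>\<in>Poly_Mapping.keys f. tw val N f w \<alpha> \<le> tw val N f w \<gamma>))}"

definition trop_var :: "('a::zero \<Rightarrow> real) \<Rightarrow> nat \<Rightarrow> 'a lpoly set \<Rightarrow> (nat \<Rightarrow> real) set" where
  "trop_var val N I = {w \<in> rspace N. \<forall>f\<in>I. w \<in> trop_hyp val N f}"

definition init_set :: "('a::zero \<Rightarrow> real) \<Rightarrow> nat \<Rightarrow> 'a lpoly \<Rightarrow> (nat \<Rightarrow> real) \<Rightarrow> (nat \<Rightarrow>\<^sub>0 int) set" where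
  "init_set val N f w = {\<alpha>\<in>Poly_Mapping.keys f. \<forall>\<gamma>\<in>Poly_Mapping.keys f. tw val N f w \<alpha> \<le> tw val N f w \<gamma>}"

text \<open>Dual cell (in the regular subdivision of New(f)) of the minimal cell of T(f)
  containing w, i.e. of the cell having w in its relative interior.\<close>
definition dual_cell :: "('a::zero \<Rightarrow> real) \<Rightarrow> nat \<Rightarrow> 'a lpoly \<Rightarrow> (nat \<Rightarrow> real) \<Rightarrow> (nat \<Rightarrow> real) set" where
  "dual_cell val N f w = convex hull (expvec ` init_set val N f w)"

definition newton :: "'a::zero lpoly \<Rightarrow> (nat \<Rightarrow> real) set" where
  "newton f = convex hull (expvec ` Poly_Mapping.keys f)"

definition affdim :: "(nat \<Rightarrow> real) set \<Rightarrow> int" where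
  "affdim S = (if S = {} then -1 else
     Max {int (card T) - 1 | T. finite T \<and> T \<subseteq> S \<and> \<not> affine_dependent T})"

definition pdim :: "(nat \<Rightarrow> real) set \<Rightarrow> int" where
  "pdim S = Max {affdim C | C. convex C \<and> C \<subseteq> S}"

definition msum :: "nat set \<Rightarrow> (nat \<Rightarrow> (nat \<Rightarrow> real) set) \<Rightarrow> (nat \<Rightarrow> real) set" where
  "msum J C = {\<Sum>j\<in>J. x j | x. \<forall>j\<in>J. x j \<in> C j}"

definition trop_inter :: "('a::zero \<Rightarrow> real) \<Rightarrow> nat \<Rightarrow> (nat \<Rightarrow> 'a lpoly) \<Rightarrow> nat set \<Rightarrow> (nat \<Rightarrow> real) set" where
  "trop_inter val N fs J = {w \<in> rspace N. \<forall>j\<in>J. w \<in> trop_hyp val N (fs j)}"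

definition proper_int :: "('a::zero \<Rightarrow> real) \<Rightarrow> nat \<Rightarrow> (nat \<Rightarrow> 'a lpoly) \<Rightarrow> nat set \<Rightarrow> bool" where
  "proper_int val N fs J \<longleftrightarrow> pdim (trop_inter val N fs J) = int N - int (card J)"

text \<open>Transversal along every cell C: for w in the relative interior of C, the minimal cell
  C_j of T(f_j) containing C has dual cell dual_cell (fs j) w, and C^dual is their Minkowski sum.\<close>
definition transversal_cells :: "('a::zero \<Rightarrow> real) \<Rightarrow> nat \<Rightarrow> (nat \<Rightarrow> 'a lpoly) \<Rightarrow> nat set \<Rightarrow> bool" where
  "transversal_cells val N fs J \<longleftrightarrow>
     (\<forall>w\<in>trop_inter val N fs J.
        affdim (msum J (\<lambda>j. dual_cell val N (fs j) w)) = (\<Sum>j\<in>J. affdim (dual_cell val N (fs j) w)))"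

definition transversal :: "('a::zero \<Rightarrow> real) \<Rightarrow> nat \<Rightarrow> (nat \<Rightarrow> 'a lpoly) \<Rightarrow> nat \<Rightarrow> bool" where
  "transversal val N fs k \<longleftrightarrow>
     (\<forall>J\<subseteq>{..<k}. 2 \<le> card J \<longrightarrow> proper_int val N fs J \<and> transversal_cells val N fs J)"

definition gen_ideal :: "nat \<Rightarrow> nat \<Rightarrow> (nat \<Rightarrow> 'a::comm_ring_1 lpoly) \<Rightarrow> nat \<Rightarrow> 'a lpoly set" where
  "gen_ideal p N fs k = {\<Sum>i<k. g i * fs i | g. \<forall>i<k. lpoly_in p N (g i)}"

definition complete_int :: "('a::comm_ring_1 \<Rightarrow> real) \<Rightarrow> nat \<Rightarrow> nat \<Rightarrow> (nat \<Rightarrow> 'a lpoly) \<Rightarrow> nat \<Rightarrow> bool" where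
  "complete_int val p N fs k \<longleftrightarrow> proper_int val N fs {..<k} \<and>
     trop_var val N (gen_ideal p N fs k) = trop_inter val N fs {..<k}"

definition restr :: "'a::comm_monoid_add lpoly \<Rightarrow> (nat \<Rightarrow> real) set \<Rightarrow> 'a lpoly" where
  "restr f A = (\<Sum>\<alpha>\<in>{\<alpha>\<in>Poly_Mapping.keys f. expvec \<alpha> \<in> A}. Poly_Mapping.single \<alpha> (Poly_Mapping.lookup f \<alpha>))"

definition eval_at :: "('a::zero \<Rightarrow> 'b::field) \<Rightarrow> nat \<Rightarrow> 'a lpoly \<Rightarrow> (nat \<Rightarrow> 'b) \<Rightarrow> 'b" where
  "eval_at emb N f z = (\<Sum>\<alpha>\<in>Poly_Mapping.keys f. emb (Poly_Mapping.lookup f \<alpha>) * (\<Prod>i<N. z i powi Poly_Mapping.lookup \<alpha> i))"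

definition newton_nondeg :: "('a::comm_monoid_add \<Rightarrow> 'b::field) \<Rightarrow> nat \<Rightarrow> (nat \<Rightarrow> 'a lpoly) \<Rightarrow> nat \<Rightarrow> bool" where
  "newton_nondeg emb N fs k \<longleftrightarrow>
     (\<forall>A. (\<forall>i<k. A i \<noteq> {} \<and> A i face_of newton (fs i)) \<and>
          msum {..<k} A face_of msum {..<k} (\<lambda>i. newton (fs i)) \<and>
          affdim (msum {..<k} A) \<le> int k - 1
        \<longrightarrow> \<not> (\<exists>z. (\<forall>i<N. z i \<noteq> 0) \<and> (\<forall>i<k. eval_at emb N (restr (fs i) (A i)) z = 0)))"

text \<open>f~ : substitute x_i by x_i * prod_j lambda_j^(v j i); lambda_j is variable n+j.\<close>
definition tilde_exp :: "nat \<Rightarrow> nat \<Rightarrow> (nat \<Rightarrow> nat \<Rightarrow> int) \<Rightarrow> (nat \<Rightarrow>\<^sub>0 int) \<Rightarrow> (nat \<Rightarrow>\<^sub>0 int)" where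
  "tilde_exp n l v \<alpha> = \<alpha> + (\<Sum>j<l. Poly_Mapping.single (n + j) (\<Sum>i<n. Poly_Mapping.lookup \<alpha> i * v j i))"

definition tilde :: "nat \<Rightarrow> nat \<Rightarrow> (nat \<Rightarrow> nat \<Rightarrow> int) \<Rightarrow> 'a::comm_monoid_add lpoly \<Rightarrow> 'a lpoly" where
  "tilde n l v f = (\<Sum>\<alpha>\<in>Poly_Mapping.keys f. Poly_Mapping.single (tilde_exp n l v \<alpha>) (Poly_Mapping.lookup f \<alpha>))"

text \<open>Standing assumptions: real valuation on K (values on nonzero elements; val 0 = infinity
  is never used), and an algebraic closure L of K given by an embedding emb.\<close>
definition real_valuation :: "('a::field \<Rightarrow> real) \<Rightarrow> bool" where
  "real_valuation val \<longleftrightarrow>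
     (\<forall>a b. a \<noteq> 0 \<and> b \<noteq> 0 \<longrightarrow> val (a * b) = val a + val b) \<and>
     (\<forall>a b. a \<noteq> 0 \<and> b \<noteq> 0 \<and> a + b \<noteq> 0 \<longrightarrow> min (val a) (val b) \<le> val (a + b))"

definition alg_closure_emb :: "('a::field \<Rightarrow> 'b::field) \<Rightarrow> bool" where
  "alg_closure_emb emb \<longleftrightarrow>
     inj emb \<and> emb 1 = 1 \<and> (\<forall>a b. emb (a + b) = emb a + emb b) \<and> (\<forall>a b. emb (a * b) = emb a * emb b) \<and>
     (\<forall>p :: 'b poly. 0 < degree p \<longrightarrow> (\<exists>x. poly p x = 0)) \<and>
     (\<forall>y. \<exists>p :: 'a poly. p \<noteq> 0 \<and> poly (map_poly emb p) y = 0)"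

end

theory Submission
  imports Defs
begin

definition ev :: "nat \<Rightarrow> nat \<Rightarrow> real" where "ev k = (\<lambda>i. if i = k then 1 else 0)"

lemma fun_sum_apply: "(\<Sum>i\<in>A. (g i :: nat \<Rightarrow> real)) x = (\<Sum>i\<in>A. g i x)"
  by (induction A rule: infinite_finite_induct) auto

lemma scaleR_apply: "(c *\<^sub>R (g :: nat \<Rightarrow> real)) x = c * g x"
  by (simp add: scaleR_fun_def)

lemma rspace_span: "rspace N \<subseteq> span (ev ` {..<N})"
proof
  fix x assume x: "x \<in> rspace N"
  have "x = (\<Sum>i<N. x i *\<^sub>R ev i)"
  proof
    fix j show "x j = (\<Sum>i<N. x i *\<^sub>R ev i) j"
      using x by (auto simp: fun_sum_apply scaleR_apply ev_def rspace_def if_distrib cong: if_cong)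
  qed
  also have "\<dots> \<in> span (ev ` {..<N})"
    by (intro span_sum span_scale span_base) auto
  finally show "x \<in> span (ev ` {..<N})" .
qed

lemma subspace_rspace: "subspace (rspace N)"
  by (auto simp: subspace_def rspace_def scaleR_apply)

lemma indep_rspace_bound:
  assumes "independent S" "S \<subseteq> rspace N"
  shows "finite S \<and> card S \<le> N"
proof -
  have "finite S \<and> card S \<le> card (ev ` {..<N})"
    by (rule independent_span_bound) (use assms rspace_span in auto)
  moreover have "card (ev ` {..<N}) \<le> N"
    using card_image_le[of "{..<N}" ev] by simp
  ultimately show ?thesis by linarith
qed

lemma basis_fin:
  assumes "V \<subseteq> rspace N"
  obtains B where "B \<subseteq> V" "independent B" "V \<subseteq> span B" "card B = dim V" "finite B" "card B \<le> N"
proof -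
  obtain B where B: "B \<subseteq> V" "independent B" "V \<subseteq> span B" "card B = dim V"
    by (rule basis_exists)
  with indep_rspace_bound[of B N] assms show ?thesis using that by auto
qed

lemma card_le_dim:
  assumes "V \<subseteq> rspace N" "independent S" "S \<subseteq> span V"
  shows "card S \<le> dim V"
proof -
  obtain B where B: "B \<subseteq> V" "independent B" "V \<subseteq> span B" "card B = dim V" "finite B"
    using basis_fin[OF assms(1)] by metis
  have "span V \<subseteq> span B" using B(3) by (simp add: span_minimal)
  then have "finite S \<and> card S \<le> card B"
    using independent_span_bound[OF B(5) assms(2)] assms(3) by auto
  with B show ?thesis by simp
qed

lemma dim_le_rspace: "V \<subseteq> rspace N \<Longrightarrow> dim V \<le> N"
  by (metis basis_fin)

lemma rspace_diff: "x \<in> rspace N \<Longrightarrow> y \<in> rspace N \<Longrightarrow> x - y \<in> rspace N"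
  by (auto simp: rspace_def)

lemma affdim_dim:
  assumes a: "a \<in> X" and X: "X \<subseteq> rspace N"
  shows "affdim X = int (dim ((\<lambda>x. x - a) ` X))"
proof -
  define D where "D = (\<lambda>x. x - a) ` X"
  have DN: "D \<subseteq> rspace N" using X a by (auto simp: D_def intro!: rspace_diff)
  define M where "M = {int (card T) - 1 | T. finite T \<and> T \<subseteq> X \<and> \<not> affine_dependent T}"
  have ub: "m \<le> int (dim D)" if "m \<in> M" for m
  proof -
    obtain T where T: "m = int (card T) - 1" "finite T" "T \<subseteq> X" "\<not> affine_dependent T"
      using \<open>m \<in> M\<close> by (auto simp: M_def)
    show ?thesis
    proof (cases "T = {}")
      case True then show ?thesis using T by simp
    next
      case False
      then obtain t where t: "t \<in> T" by auto
      let ?S = "(\<lambda>x. -t + x) ` (T - {t})"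
      have ind: "independent ?S" using T(4) affine_dependent_iff_dependent2[OF t] by simp
      have sub: "?S \<subseteq> span D"
      proof
        fix y assume "y \<in> ?S"
        then obtain x where x: "x \<in> T" "y = -t + x" by auto
        have "y = (x - a) - (t - a)" using x by simp
        moreover have "x - a \<in> span D" "t - a \<in> span D"
          using x t T(3) by (auto simp: D_def intro!: span_base)
        ultimately show "y \<in> span D" by (metis span_diff)
      qed
      have "card ?S = card T - 1"
        by (subst card_image) (auto simp: inj_on_def T(2) t)
      moreover have "card ?S \<le> dim D" by (rule card_le_dim[OF DN ind sub])
      moreover have "card T \<ge> 1" using t T(2) False by (simp add: Suc_leI card_gt_0_iff)
      ultimately show ?thesis using T(1) by linarith
    qed
  qed
  have att: "int (dim D) \<in> M"
  proof -
    obtain B where B: "B \<subseteq> D" "independent B" "D \<subseteq> span B" "card B = dim D" "finite B"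
      using basis_fin[OF DN] by metis
    have a0: "a \<notin> (+) a ` B"
    proof
      assume "a \<in> (+) a ` B" then have "0 \<in> B" by auto
      with B(2) show False using dependent_zero by blast
    qed
    let ?T = "insert a ((+) a ` B)"
    have img: "(\<lambda>x. -a + x) ` ((+) a ` B) = B" by (auto simp: image_image)
    have "\<not> affine_dependent ?T"
      using affine_dependent_iff_dependent[OF a0] img B(2) by simp
    moreover have "?T \<subseteq> X" using B(1) a by (auto simp: D_def)
    moreover have "card ?T = card B + 1"
      using a0 B(5) by (simp add: card_image)
    ultimately show ?thesis unfolding M_def using B(4) B(5)
      by (intro CollectI exI[of _ ?T]) auto
  qed
  have "M \<subseteq> {-1..int (dim D)}"
  proof
    fix m assume "m \<in> M" then show "m \<in> {-1..int (dim D)}"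
      using ub[OF \<open>m \<in> M\<close>] by (auto simp: M_def)
  qed
  then have "finite M" by (rule finite_subset) simp
  then have "Max M = int (dim D)" using ub att by (intro Max_eqI) auto
  moreover have "X \<noteq> {}" using a by auto
  ultimately show ?thesis unfolding affdim_def M_def D_def by simp
qed

lemma dep_image:
  assumes lin: "linear (L :: (nat \<Rightarrow> real) \<Rightarrow> (nat \<Rightarrow> real))" and inj: "inj L"
    and d: "dependent Y"
  shows "dependent (L ` Y)"
proof -
  obtain t u where tu: "finite t" "t \<subseteq> Y" "(\<Sum>v\<in>t. u v *\<^sub>R v) = 0" "\<exists>v\<in>t. u v \<noteq> 0"
    using d unfolding dependent_explicit by blast
  define u' where "u' = (\<lambda>y. u (inv L y))"
  have "(\<Sum>y\<in>L ` t. u' y *\<^sub>R y) = (\<Sum>v\<in>t. u v *\<^sub>R L v)"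
    by (subst sum.reindex) (auto simp: u'_def inj_on_subset[OF inj] inv_f_f[OF inj])
  also have "\<dots> = L (\<Sum>v\<in>t. u v *\<^sub>R v)"
    by (simp add: linear_sum[OF lin] linear_scale[OF lin])
  also have "\<dots> = 0" using tu(3) linear_0[OF lin] by simp
  finally have "(\<Sum>y\<in>L ` t. u' y *\<^sub>R y) = 0" .
  moreover have "\<exists>y\<in>L ` t. u' y \<noteq> 0" using tu(4) by (auto simp: u'_def inv_f_f[OF inj])
  ultimately show ?thesis unfolding dependent_explicit using tu(1,2) by blast
qed

lemma affdep_image:
  assumes lin: "linear (L :: (nat \<Rightarrow> real) \<Rightarrow> (nat \<Rightarrow> real))" and inj: "inj L"
  shows "affine_dependent (L ` T) \<longleftrightarrow> affine_dependent T"
proof (cases "T = {}")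
  case True then show ?thesis by (simp add: affine_dependent_def)
next
  case False
  then obtain a where a: "a \<in> T" by auto
  have e1: "L ` T - {L a} = L ` (T - {a})" using inj by (simp add: image_set_diff)
  have eq: "(\<lambda>x. - L a + x) ` (L ` T - {L a}) = L ` ((\<lambda>x. - a + x) ` (T - {a}))"
  proof -
    have "(\<lambda>x. - L a + x) ` (L ` (T - {a})) = (\<lambda>x. L (- a + x)) ` (T - {a})"
      unfolding image_image
    proof (rule image_cong[OF refl])
      fix x show "- L a + L x = L (- a + x)" using linear_add[OF lin] linear_neg[OF lin] by metis
    qed
    then show ?thesis unfolding e1 by (simp add: image_image)
  qed
  have "affine_dependent (L ` T) \<longleftrightarrow> dependent ((\<lambda>x. - L a + x) ` (L ` T - {L a}))"
    using a by (intro affine_dependent_iff_dependent2) auto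
  also have "\<dots> \<longleftrightarrow> dependent ((\<lambda>x. - a + x) ` (T - {a}))"
    unfolding eq
  proof
    assume "dependent (L ` ((\<lambda>x. - a + x) ` (T - {a})))"
    then show "dependent ((\<lambda>x. - a + x) ` (T - {a}))"
      by (rule linear_dependent_inj_imageD[OF lin]) (rule inj_on_subset[OF inj], simp)
  next
    assume d: "dependent ((\<lambda>x. - a + x) ` (T - {a}))"
    show "dependent (L ` ((\<lambda>x. - a + x) ` (T - {a})))"
      by (rule dep_image[OF lin inj d])
  qed
  also have "\<dots> \<longleftrightarrow> affine_dependent T"
    using a by (intro affine_dependent_iff_dependent2[symmetric])
  finally show ?thesis .
qed

lemma affdim_image:
  assumes lin: "linear L" and inj: "inj L"
  shows "affdim (L ` X) = affdim X"
proof -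
  have "{int (card T) - 1 | T. finite T \<and> T \<subseteq> L ` X \<and> \<not> affine_dependent T} =
        {int (card T) - 1 | T. finite T \<and> T \<subseteq> X \<and> \<not> affine_dependent T}"
  proof (intro set_eqI iffI)
    fix m assume "m \<in> {int (card T) - 1 | T. finite T \<and> T \<subseteq> L ` X \<and> \<not> affine_dependent T}"
    then obtain T where T: "m = int (card T) - 1" "finite T" "T \<subseteq> L ` X" "\<not> affine_dependent T" by auto
    define T0 where "T0 = {x \<in> X. L x \<in> T}"
    have LT: "L ` T0 = T" using T(3) by (auto simp: T0_def)
    have "finite T0" using T(2) LT inj by (metis finite_imageD inj_on_subset subset_UNIV)
    moreover have "card T0 = card T" using LT inj by (metis card_image inj_on_subset subset_UNIV)
    moreover have "\<not> affine_dependent T0" using T(4) LT affdep_image[OF lin inj] by metis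
    ultimately show "m \<in> {int (card T) - 1 | T. finite T \<and> T \<subseteq> X \<and> \<not> affine_dependent T}"
      using T(1) by (intro CollectI exI[of _ T0]) (auto simp: T0_def)
  next
    fix m assume "m \<in> {int (card T) - 1 | T. finite T \<and> T \<subseteq> X \<and> \<not> affine_dependent T}"
    then obtain T where T: "m = int (card T) - 1" "finite T" "T \<subseteq> X" "\<not> affine_dependent T" by auto
    have "card (L ` T) = card T" using inj by (metis card_image inj_on_subset subset_UNIV)
    then show "m \<in> {int (card T) - 1 | T. finite T \<and> T \<subseteq> L ` X \<and> \<not> affine_dependent T}"
      using T affdep_image[OF lin inj, of T] by (intro CollectI exI[of _ "L ` T"]) auto
  qed
  then show ?thesis unfolding affdim_def by simp
qed

lemma affdim_empty: "affdim {} = -1" by (simp add: affdim_def)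

lemma affdim_range:
  assumes "X \<subseteq> rspace N" shows "affdim X \<in> {-1..int N}"
proof (cases "X = {}")
  case True then show ?thesis by (simp add: affdim_empty)
next
  case False
  then obtain a where a: "a \<in> X" by auto
  have "(\<lambda>x. x - a) ` X \<subseteq> rspace N" using assms a by (auto intro!: rspace_diff)
  then have "dim ((\<lambda>x. x - a) ` X) \<le> N" by (rule dim_le_rspace)
  then show ?thesis using affdim_dim[OF a assms] by simp
qed

lemma affdim_singleton: "affdim {a} = 0"
proof -
  have "affdim {a} = Max {int (card T) - 1 | T. finite T \<and> T \<subseteq> {a} \<and> \<not> affine_dependent T}"
    by (simp add: affdim_def)
  also have "{int (card T) - 1 | T. finite T \<and> T \<subseteq> {a} \<and> \<not> affine_dependent T} = {-1, 0}"
  proof -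
    have s: "T \<subseteq> {a} \<longleftrightarrow> T = {} \<or> T = {a}" for T :: "(nat \<Rightarrow> real) set" by auto
    have n1: "\<not> affine_dependent {a}" by (simp add: affine_dependent_def)
    have n0: "\<not> affine_dependent ({} :: (nat \<Rightarrow> real) set)" by (simp add: affine_dependent_def)
    show ?thesis
    proof (intro set_eqI iffI)
      fix m assume "m \<in> {int (card T) - 1 | T. finite T \<and> T \<subseteq> {a} \<and> \<not> affine_dependent T}"
      then show "m \<in> {-1, 0}" unfolding s by auto
    next
      fix m :: int assume "m \<in> {-1, 0}"
      then have "m = int (card ({}::(nat \<Rightarrow> real) set)) - 1 \<or> m = int (card {a}) - 1" by auto
      then show "m \<in> {int (card T) - 1 | T. finite T \<and> T \<subseteq> {a} \<and> \<not> affine_dependent T}"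
        using n0 n1 by blast
    qed
  qed
  finally show ?thesis by simp
qed

lemma pdim_fin:
  assumes "S \<subseteq> rspace N" shows "finite {affdim C | C. convex C \<and> C \<subseteq> S}"
proof (rule finite_subset)
  show "{affdim C | C. convex C \<and> C \<subseteq> S} \<subseteq> {-1..int N}"
    using affdim_range assms by blast
qed simp

lemma pdim_ge:
  assumes "S \<subseteq> rspace N" "convex C" "C \<subseteq> S" shows "affdim C \<le> pdim S"
  unfolding pdim_def using pdim_fin[OF assms(1)] assms(2,3) by (intro Max_ge) auto

lemma pdim_att:
  assumes "S \<subseteq> rspace N" obtains C where "convex C" "C \<subseteq> S" "affdim C = pdim S"
proof -
  have "pdim S \<in> {affdim C | C. convex C \<and> C \<subseteq> S}"
    unfolding pdim_def using pdim_fin[OF assms(1)] by (intro Max_in) auto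
  then show ?thesis using that by auto
qed

lemma pdim_empty: "pdim {} = -1"
proof -
  have "{affdim C | C. convex C \<and> C \<subseteq> ({} :: (nat \<Rightarrow> real) set)} = {-1}"
    by (auto simp: affdim_empty)
  then show ?thesis by (simp add: pdim_def)
qed

lemma pdim_nonneg:
  assumes "S \<subseteq> rspace N" "a \<in> S" shows "0 \<le> pdim S"
  using pdim_ge[OF assms(1), of "{a}"] assms(2) affdim_singleton by simp

lemma pdim_image:
  assumes lin: "linear L" and inj: "inj L" and linv: "linear L'" and inv: "\<And>x. L (L' x) = x"
  shows "pdim (L ` X) = pdim X"
proof -
  have "{affdim C | C. convex C \<and> C \<subseteq> L ` X} = {affdim C | C. convex C \<and> C \<subseteq> X}"
  proof (intro set_eqI iffI)
    fix m assume "m \<in> {affdim C | C. convex C \<and> C \<subseteq> L ` X}"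
    then obtain C where C: "m = affdim C" "convex C" "C \<subseteq> L ` X" by auto
    have CL: "C = L ` (L' ` C)" using inv by (auto simp: image_image)
    have "L' ` C \<subseteq> X"
    proof
      fix y assume "y \<in> L' ` C"
      then obtain c where c: "c \<in> C" "y = L' c" by auto
      then obtain x where x: "x \<in> X" "c = L x" using C(3) by auto
      have "L y = L x" using c x inv by simp
      then show "y \<in> X" using inj x by (simp add: inj_eq)
    qed
    moreover have "convex (L' ` C)" using linv C(2) by (rule convex_linear_image)
    moreover have "affdim (L' ` C) = m" using C(1) CL affdim_image[OF lin inj] by metis
    ultimately show "m \<in> {affdim C | C. convex C \<and> C \<subseteq> X}" by auto
  next
    fix m assume "m \<in> {affdim C | C. convex C \<and> C \<subseteq> X}"
    then obtain C where C: "m = affdim C" "convex C" "C \<subseteq> X" by auto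
    then show "m \<in> {affdim C | C. convex C \<and> C \<subseteq> L ` X}"
      using affdim_image[OF lin inj, of C] convex_linear_image[OF lin C(2)]
      by (intro CollectI exI[of _ "L ` C"]) auto
  qed
  then show ?thesis by (simp add: pdim_def)
qed

definition trunc :: "nat \<Rightarrow> (nat \<Rightarrow> real) \<Rightarrow> (nat \<Rightarrow> real)" where
  "trunc n x = (\<lambda>i. if i < n then x i else 0)"

lemma linear_trunc: "linear (trunc n)"
  by (rule linearI) (auto simp: trunc_def scaleR_apply fun_eq_iff)

lemma trunc_rspace: "trunc n x \<in> rspace n"
  by (simp add: trunc_def rspace_def)

lemma trunc_id: "x \<in> rspace n \<Longrightarrow> trunc n x = x"
  by (auto simp: trunc_def rspace_def fun_eq_iff)

lemma rspace_mono: "n \<le> N \<Longrightarrow> rspace n \<subseteq> rspace N"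
  by (auto simp: rspace_def)

lemma indep_ext:
  assumes "independent B" "B \<subseteq> rspace n"
  shows "independent (B \<union> ev ` {n..<n+l}) \<and> card (B \<union> ev ` {n..<n+l}) = card B + l"
proof (induction l)
  case 0 then show ?case using assms by simp
next
  case (Suc l)
  have fB: "finite B" using indep_rspace_bound[OF assms] by simp
  have evr: "ev i \<in> rspace (n+l)" if "i < n+l" for i
    using that unfolding rspace_def ev_def by simp
  have sub: "B \<union> ev ` {n..<n+l} \<subseteq> rspace (n+l)"
  proof -
    have "B \<subseteq> rspace (n+l)" using assms(2) rspace_mono[of n "n+l"] by simp
    moreover have "ev ` {n..<n+l} \<subseteq> rspace (n+l)" using evr by auto
    ultimately show ?thesis by simp
  qed
  have notr: "ev (n+l) \<notin> rspace (n+l)"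
  proof
    assume "ev (n+l) \<in> rspace (n+l)"
    then have "\<forall>i\<ge>n+l. ev (n+l) i = 0" unfolding rspace_def by simp
    then have "ev (n+l) (n+l) = 0" by simp
    then show False by (simp add: ev_def)
  qed
  have nots: "ev (n+l) \<notin> span (B \<union> ev ` {n..<n+l})"
    using span_minimal[OF sub subspace_rspace] notr by blast
  have notin: "ev (n+l) \<notin> B \<union> ev ` {n..<n+l}" using sub notr by blast
  have eq: "B \<union> ev ` {n..<n + Suc l} = insert (ev (n+l)) (B \<union> ev ` {n..<n+l})"
    by (simp add: atLeastLessThanSuc)
  have fin: "finite (B \<union> ev ` {n..<n+l})" using fB by simp
  have "independent (insert (ev (n+l)) (B \<union> ev ` {n..<n+l}))"
    using Suc.IH nots by (simp add: independent_insertI)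
  moreover have "card (insert (ev (n+l)) (B \<union> ev ` {n..<n+l})) = card B + Suc l"
    using Suc.IH notin fin by simp
  ultimately show ?case unfolding eq by simp
qed

lemma dim_union_le:
  assumes "A \<subseteq> rspace N" "finite E" "X \<subseteq> span (A \<union> E)"
  shows "dim X \<le> dim A + card E"
proof -
  obtain B where B: "B \<subseteq> A" "independent B" "A \<subseteq> span B" "card B = dim A" "finite B"
    using basis_fin[OF assms(1)] by metis
  have "span (A \<union> E) \<subseteq> span (B \<union> E)"
  proof (rule span_minimal[OF _ subspace_span])
    show "A \<union> E \<subseteq> span (B \<union> E)"
    proof
      fix x assume "x \<in> A \<union> E"
      then show "x \<in> span (B \<union> E)"
      proof
        assume "x \<in> A" then have "x \<in> span B" using B(3) by auto
        then show ?thesis using span_mono[of B "B \<union> E"] by auto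
      next
        assume "x \<in> E" then show ?thesis by (intro span_base) simp
      qed
    qed
  qed
  then have "X \<subseteq> span (B \<union> E)" using assms(3) by blast
  then have "dim X \<le> card (B \<union> E)" using B(5) assms(2) by (intro dim_le_card) auto
  also have "\<dots> \<le> card B + card E" by (rule card_Un_le)
  finally show ?thesis using B(4) by simp
qed

lemma pdim_prod:
  assumes S: "S \<subseteq> rspace n" "S \<noteq> {}"
  shows "pdim {u \<in> rspace (n+l). trunc n u \<in> S} = pdim S + int l"
proof -
  define Q where "Q = {u \<in> rspace (n+l). trunc n u \<in> S}"
  have QN: "Q \<subseteq> rspace (n+l)" by (auto simp: Q_def)
  have ge: "pdim S + int l \<le> pdim Q"
  proof -
    obtain C where C: "convex C" "C \<subseteq> S" "affdim C = pdim S" using pdim_att[OF S(1)] by metis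
    obtain s where s: "s \<in> S" using S(2) by auto
    have "0 \<le> pdim S" by (rule pdim_nonneg[OF S(1) s])
    then have "C \<noteq> {}" using C(3) affdim_empty by auto
    then obtain a where a: "a \<in> C" by auto
    have CN: "C \<subseteq> rspace n" using C(2) S(1) by auto
    define C' where "C' = {u \<in> rspace (n+l). trunc n u \<in> C}"
    have C'conv: "convex C'"
    proof -
      have "C' = rspace (n+l) \<inter> trunc n -` C" by (auto simp: C'_def)
      moreover have "convex (rspace (n+l))" by (rule subspace_imp_convex[OF subspace_rspace])
      moreover have "convex (trunc n -` C)" by (rule convex_linear_vimage[OF linear_trunc C(1)])
      ultimately show ?thesis by (simp add: convex_Int)
    qed
    have C'Q: "C' \<subseteq> Q" using C(2) by (auto simp: C'_def Q_def)
    have C'N: "C' \<subseteq> rspace (n+l)" by (auto simp: C'_def)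
    have CC': "C \<subseteq> C'" using CN rspace_mono[of n "n+l"] by (auto simp: C'_def trunc_id)
    have aC': "a \<in> C'" using CC' a by auto
    define D where "D = (\<lambda>x. x - a) ` C"
    define D' where "D' = (\<lambda>x. x - a) ` C'"
    have DN: "D \<subseteq> rspace n" using CN a by (auto simp: D_def intro!: rspace_diff)
    have D'N: "D' \<subseteq> rspace (n+l)" using C'N aC' by (auto simp: D'_def intro!: rspace_diff)
    obtain B where B: "B \<subseteq> D" "independent B" "D \<subseteq> span B" "card B = dim D" "finite B"
      using basis_fin[OF DN] by metis
    have BN: "B \<subseteq> rspace n" using B(1) DN by auto
    have evD': "ev ` {n..<n+l} \<subseteq> D'"
    proof
      fix y assume "y \<in> ev ` {n..<n+l}"
      then obtain i where i: "n \<le> i" "i < n+l" "y = ev i" by auto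
      have "a + ev i \<in> C'"
      proof -
        have "a + ev i \<in> rspace (n+l)" using a CN i by (auto simp: rspace_def ev_def)
        moreover have "trunc n (a + ev i) = a"
          using a CN i by (auto simp: trunc_def fun_eq_iff ev_def rspace_def)
        ultimately show ?thesis using a by (simp add: C'_def)
      qed
      then show "y \<in> D'" unfolding D'_def using i by (intro image_eqI[of _ _ "a + ev i"]) auto
    qed
    have BD': "B \<subseteq> D'" using B(1) CC' by (auto simp: D_def D'_def)
    from indep_ext[OF B(2) BN, of l]
    have ind: "independent (B \<union> ev ` {n..<n+l})" and cd: "card (B \<union> ev ` {n..<n+l}) = card B + l"
      by auto
    have "card (B \<union> ev ` {n..<n+l}) \<le> dim D'"
      using card_le_dim[OF D'N ind] BD' evD' span_superset by blast
    then have "dim D + l \<le> dim D'" using cd B(4) by simp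
    moreover have "affdim C = int (dim D)" using affdim_dim[OF a CN] by (simp add: D_def)
    moreover have "affdim C' = int (dim D')" using affdim_dim[OF aC' C'N] by (simp add: D'_def)
    moreover have "affdim C' \<le> pdim Q" by (rule pdim_ge[OF QN C'conv C'Q])
    ultimately show ?thesis using C(3) by linarith
  qed
  have le: "pdim Q \<le> pdim S + int l"
  proof -
    obtain C' where C': "convex C'" "C' \<subseteq> Q" "affdim C' = pdim Q" using pdim_att[OF QN] by metis
    obtain s where s: "s \<in> S" using S(2) by auto
    have p0: "0 \<le> pdim S" by (rule pdim_nonneg[OF S(1) s])
    show ?thesis
    proof (cases "C' = {}")
      case True then show ?thesis using C'(3) affdim_empty p0 by simp
    next
      case False
      then obtain a where a: "a \<in> C'" by auto
      have C'N: "C' \<subseteq> rspace (n+l)" using C'(2) QN by auto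
      define D' where "D' = (\<lambda>x. x - a) ` C'"
      have D'N: "D' \<subseteq> rspace (n+l)" using C'N a by (auto simp: D'_def intro!: rspace_diff)
      define TC where "TC = trunc n ` C'"
      have TCconv: "convex TC" unfolding TC_def by (rule convex_linear_image[OF linear_trunc C'(1)])
      have TCS: "TC \<subseteq> S" using C'(2) by (auto simp: TC_def Q_def)
      have ta: "trunc n a \<in> TC" using a by (simp add: TC_def)
      have TCN: "TC \<subseteq> rspace n" by (auto simp: TC_def trunc_rspace)
      define TD where "TD = (\<lambda>x. x - trunc n a) ` TC"
      have TDeq: "TD = trunc n ` D'"
        by (auto simp: TD_def TC_def D'_def image_image linear_diff[OF linear_trunc])
      have TDN: "TD \<subseteq> rspace n" by (auto simp: TDeq trunc_rspace)
      have spanD': "D' \<subseteq> span (TD \<union> ev ` {n..<n+l})"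
      proof
        fix u assume u: "u \<in> D'"
        have uN: "u \<in> rspace (n+l)" using u D'N by auto
        have "u = trunc n u + (\<Sum>i\<in>{n..<n+l}. u i *\<^sub>R ev i)"
        proof
          fix j
          show "u j = (trunc n u + (\<Sum>i\<in>{n..<n+l}. u i *\<^sub>R ev i)) j"
          proof (cases "j < n")
            case True then show ?thesis
              by (simp add: trunc_def fun_sum_apply scaleR_apply ev_def)
          next
            case False
            then have "(\<Sum>i\<in>{n..<n+l}. u i *\<^sub>R ev i) j = (if j < n + l then u j else 0)"
              by (simp add: fun_sum_apply scaleR_apply ev_def if_distrib cong: if_cong)
            then show ?thesis using False uN by (auto simp: trunc_def rspace_def)
          qed
        qed
        moreover have "trunc n u \<in> span (TD \<union> ev ` {n..<n+l})"
          using u by (intro span_base) (auto simp: TDeq)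
        moreover have "(\<Sum>i\<in>{n..<n+l}. u i *\<^sub>R ev i) \<in> span (TD \<union> ev ` {n..<n+l})"
          by (intro span_sum span_scale span_base) auto
        ultimately show "u \<in> span (TD \<union> ev ` {n..<n+l})" by (metis span_add)
      qed
      have "dim D' \<le> dim TD + card (ev ` {n..<n+l})"
        by (rule dim_union_le[OF TDN _ spanD']) simp
      moreover have "card (ev ` {n..<n+l}) \<le> l" using card_image_le[of "{n..<n+l}" ev] by simp
      moreover have "affdim C' = int (dim D')" using affdim_dim[OF a C'N] by (simp add: D'_def)
      moreover have "affdim TC = int (dim TD)" using affdim_dim[OF ta TCN] by (simp add: TD_def)
      moreover have "affdim TC \<le> pdim S" by (rule pdim_ge[OF S(1) TCconv TCS])
      ultimately show ?thesis using C'(3) by linarith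
    qed
  qed
  show ?thesis using ge le by (simp add: Q_def)
qed

definition pmk :: "('e \<Rightarrow> 'e) \<Rightarrow> ('e \<Rightarrow>\<^sub>0 'a::comm_monoid_add) \<Rightarrow> ('e \<Rightarrow>\<^sub>0 'a)" where
  "pmk \<phi> f = (\<Sum>\<alpha>\<in>Poly_Mapping.keys f. Poly_Mapping.single (\<phi> \<alpha>) (Poly_Mapping.lookup f \<alpha>))"

lemma lookup_pmk:
  assumes inv1: "\<And>a. \<psi> (\<phi> a) = a" and inv2: "\<And>b. \<phi> (\<psi> b) = b"
  shows "Poly_Mapping.lookup (pmk \<phi> f) \<beta> = Poly_Mapping.lookup f (\<psi> \<beta>)"
proof -
  have "Poly_Mapping.lookup (pmk \<phi> f) \<beta> =
        (\<Sum>\<alpha>\<in>Poly_Mapping.keys f. (Poly_Mapping.lookup f \<alpha> when \<phi> \<alpha> = \<beta>))"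
    by (simp add: pmk_def lookup_sum lookup_single)
  also have "\<dots> = (\<Sum>\<alpha>\<in>Poly_Mapping.keys f. (if \<alpha> = \<psi> \<beta> then Poly_Mapping.lookup f \<alpha> else 0))"
    by (rule sum.cong) (auto simp: when_def, (metis inv1 inv2)+)
  also have "\<dots> = Poly_Mapping.lookup f (\<psi> \<beta>)"
    by (simp add: in_keys_iff)
  finally show ?thesis .
qed

lemma pmk_id: "pmk (\<lambda>x. x) f = f"
  by (rule poly_mapping_eqI) (simp add: lookup_pmk)

lemma keys_pmk:
  assumes inv1: "\<And>a. \<psi> (\<phi> a) = a" and inv2: "\<And>b. \<phi> (\<psi> b) = b"
  shows "Poly_Mapping.keys (pmk \<phi> f) = \<phi> ` Poly_Mapping.keys f"
proof (intro set_eqI iffI)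
  fix x assume "x \<in> Poly_Mapping.keys (pmk \<phi> f)"
  then have "\<psi> x \<in> Poly_Mapping.keys f" by (simp add: in_keys_iff lookup_pmk[OF inv1 inv2])
  then show "x \<in> \<phi> ` Poly_Mapping.keys f" using inv2[of x] by (metis image_eqI)
next
  fix x assume "x \<in> \<phi> ` Poly_Mapping.keys f"
  then show "x \<in> Poly_Mapping.keys (pmk \<phi> f)" by (auto simp: in_keys_iff lookup_pmk[OF inv1 inv2] inv1)
qed

lemma pmk_sum:
  assumes inv1: "\<And>a. \<psi> (\<phi> a) = a" and inv2: "\<And>b. \<phi> (\<psi> b) = b"
  shows "pmk \<phi> (\<Sum>i\<in>I. F i) = (\<Sum>i\<in>I. pmk \<phi> (F i))"
  by (rule poly_mapping_eqI) (simp add: lookup_pmk[OF inv1 inv2] lookup_sum)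

lemma pmk_add:
  assumes inv1: "\<And>a. \<psi> (\<phi> a) = a" and inv2: "\<And>b. \<phi> (\<psi> b) = b"
  shows "pmk \<phi> (f + g) = pmk \<phi> f + pmk \<phi> g"
  by (rule poly_mapping_eqI) (simp add: lookup_pmk[OF inv1 inv2] lookup_add)

lemma pmk_single:
  assumes inv1: "\<And>a. \<psi> (\<phi> a) = a" and inv2: "\<And>b. \<phi> (\<psi> b) = b"
  shows "pmk \<phi> (Poly_Mapping.single a c) = Poly_Mapping.single (\<phi> a) c"
  by (rule poly_mapping_eqI) (auto simp: lookup_pmk[OF inv1 inv2] lookup_single when_def, (metis inv1 inv2)+)

lemma pmk_comp:
  assumes inv1: "\<And>a. \<psi> (\<phi> a) = a" and inv2: "\<And>b. \<phi> (\<psi> b) = b"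
  shows "pmk \<phi> (pmk \<psi> f) = f"
  by (rule poly_mapping_eqI) (simp add: lookup_pmk[OF inv1 inv2] lookup_pmk[OF inv2 inv1] inv2)

lemma monom_expand: "f = (\<Sum>\<alpha>\<in>Poly_Mapping.keys f. Poly_Mapping.single \<alpha> (Poly_Mapping.lookup f \<alpha>))"
  using pmk_id[of f] by (simp add: pmk_def)

lemma pmk_mult:
  fixes f g :: "('e::comm_monoid_add \<Rightarrow>\<^sub>0 'a::comm_ring_1)"
  assumes inv1: "\<And>a. \<psi> (\<phi> a) = a" and inv2: "\<And>b. \<phi> (\<psi> b) = b"
    and add: "\<And>a b. \<phi> (a + b) = \<phi> a + \<phi> b"
  shows "pmk \<phi> (f * g) = pmk \<phi> f * pmk \<phi> g"
proof -
  let ?F = "\<lambda>a. Poly_Mapping.single a (Poly_Mapping.lookup f a)"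
  let ?G = "\<lambda>b. Poly_Mapping.single b (Poly_Mapping.lookup g b)"
  have "f * g = (\<Sum>a\<in>Poly_Mapping.keys f. \<Sum>b\<in>Poly_Mapping.keys g. ?F a * ?G b)"
    by (subst monom_expand[of f], subst monom_expand[of g]) (simp add: sum_product)
  then have "pmk \<phi> (f * g) = (\<Sum>a\<in>Poly_Mapping.keys f. \<Sum>b\<in>Poly_Mapping.keys g. pmk \<phi> (?F a * ?G b))"
    by (simp add: pmk_sum[OF inv1 inv2])
  also have "\<dots> = (\<Sum>a\<in>Poly_Mapping.keys f. \<Sum>b\<in>Poly_Mapping.keys g.
      Poly_Mapping.single (\<phi> a) (Poly_Mapping.lookup f a) * Poly_Mapping.single (\<phi> b) (Poly_Mapping.lookup g b))"
    by (simp add: mult_single pmk_single[OF inv1 inv2] add)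
  also have "\<dots> = pmk \<phi> f * pmk \<phi> g"
    by (simp add: pmk_def sum_product)
  finally show ?thesis .
qed

definition sx :: "nat \<Rightarrow> nat \<Rightarrow> (nat \<Rightarrow> nat \<Rightarrow> int) \<Rightarrow> (nat \<Rightarrow>\<^sub>0 int) \<Rightarrow> (nat \<Rightarrow>\<^sub>0 int)" where
  "sx n l v \<alpha> = (\<Sum>j<l. Poly_Mapping.single (n + j) (\<Sum>i<n. Poly_Mapping.lookup \<alpha> i * v j i))"

definition tinv :: "nat \<Rightarrow> nat \<Rightarrow> (nat \<Rightarrow> nat \<Rightarrow> int) \<Rightarrow> (nat \<Rightarrow>\<^sub>0 int) \<Rightarrow> (nat \<Rightarrow>\<^sub>0 int)" where
  "tinv n l v \<alpha> = \<alpha> - sx n l v \<alpha>"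

lemma tilde_exp_sx: "tilde_exp n l v \<alpha> = \<alpha> + sx n l v \<alpha>"
  by (simp add: tilde_exp_def sx_def)

lemma lookup_sx: "Poly_Mapping.lookup (sx n l v \<alpha>) i =
   (if n \<le> i \<and> i < n + l then (\<Sum>c<n. Poly_Mapping.lookup \<alpha> c * v (i - n) c) else 0)"
proof -
  have "Poly_Mapping.lookup (sx n l v \<alpha>) i =
        (\<Sum>j<l. if n + j = i then (\<Sum>c<n. Poly_Mapping.lookup \<alpha> c * v j c) else 0)"
    by (simp add: sx_def lookup_sum lookup_single when_def)
  also have "\<dots> = (if n \<le> i \<and> i < n + l then (\<Sum>c<n. Poly_Mapping.lookup \<alpha> c * v (i - n) c) else 0)"
  proof (cases "n \<le> i \<and> i < n + l")
    case True
    then have "(\<Sum>j<l. if n + j = i then (\<Sum>c<n. Poly_Mapping.lookup \<alpha> c * v j c) else 0) =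
        (\<Sum>j<l. if j = i - n then (\<Sum>c<n. Poly_Mapping.lookup \<alpha> c * v j c) else 0)"
      by (intro sum.cong) auto
    also have "\<dots> = (\<Sum>c<n. Poly_Mapping.lookup \<alpha> c * v (i - n) c)"
      using True by (subst sum.delta) auto
    finally show ?thesis using True by simp
  next
    case False
    then show ?thesis by (intro trans[OF sum.neutral]) auto
  qed
  finally show ?thesis .
qed

lemma sx_cong: "(\<And>i. i < n \<Longrightarrow> Poly_Mapping.lookup \<alpha> i = Poly_Mapping.lookup \<beta> i) \<Longrightarrow> sx n l v \<alpha> = sx n l v \<beta>"
  unfolding sx_def by (intro sum.cong refl arg_cong[where f="Poly_Mapping.single _"]) simp

lemma sx_add: "sx n l v (\<alpha> + \<beta>) = sx n l v \<alpha> + sx n l v \<beta>"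
  by (rule poly_mapping_eqI) (simp add: lookup_sx lookup_add sum.distrib distrib_right)

lemma sx_sx: "sx n l v (sx n l v \<alpha>) = 0"
proof -
  have "sx n l v (sx n l v \<alpha>) = sx n l v 0"
    by (rule sx_cong) (simp add: lookup_sx)
  also have "\<dots> = 0" by (simp add: sx_def)
  finally show ?thesis .
qed

lemma sx_tinv: "sx n l v (tinv n l v \<alpha>) = sx n l v \<alpha>"
  by (rule sx_cong) (simp add: tinv_def lookup_minus lookup_sx)

lemma tinv_T: "tinv n l v (tilde_exp n l v \<alpha>) = \<alpha>"
  by (simp add: tinv_def tilde_exp_sx sx_add sx_sx)

lemma T_tinv: "tilde_exp n l v (tinv n l v \<alpha>) = \<alpha>"
  by (simp add: tilde_exp_sx sx_tinv) (simp add: tinv_def)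

lemma T_add: "tilde_exp n l v (\<alpha> + \<beta>) = tilde_exp n l v \<alpha> + tilde_exp n l v \<beta>"
  by (simp add: tilde_exp_sx sx_add algebra_simps)

lemma tinv_add: "tinv n l v (\<alpha> + \<beta>) = tinv n l v \<alpha> + tinv n l v \<beta>"
  by (simp add: tinv_def sx_add algebra_simps)

lemma tilde_pmk: "tilde n l v f = pmk (tilde_exp n l v) f"
  by (simp add: tilde_def pmk_def)

lemma lookup_tilde: "Poly_Mapping.lookup (tilde n l v f) \<beta> = Poly_Mapping.lookup f (tinv n l v \<beta>)"
  unfolding tilde_pmk by (rule lookup_pmk) (simp_all add: tinv_T T_tinv)

lemma keys_tilde: "Poly_Mapping.keys (tilde n l v f) = tilde_exp n l v ` Poly_Mapping.keys f"
  unfolding tilde_pmk by (rule keys_pmk[where \<psi>="tinv n l v"]) (simp_all add: tinv_T T_tinv)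

lemma lookup_T: "Poly_Mapping.lookup (tilde_exp n l v \<alpha>) i = Poly_Mapping.lookup \<alpha> i +
   (if n \<le> i \<and> i < n + l then (\<Sum>c<n. Poly_Mapping.lookup \<alpha> c * v (i - n) c) else 0)"
  by (simp add: tilde_exp_sx lookup_add lookup_sx)

definition Phi :: "nat \<Rightarrow> nat \<Rightarrow> (nat \<Rightarrow> nat \<Rightarrow> int) \<Rightarrow> (nat \<Rightarrow> real) \<Rightarrow> (nat \<Rightarrow> real)" where
  "Phi n l v w = (\<lambda>i. if i < n then w i + (\<Sum>j<l. real_of_int (v j i) * w (n + j)) else w i)"

lemma dotp_T: "dotp (n + l) (tilde_exp n l v \<alpha>) w = dotp (n + l) \<alpha> (Phi n l v w)"
proof -
  let ?a = "\<lambda>i. real_of_int (Poly_Mapping.lookup \<alpha> i)"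
  have split: "\<And>g :: nat \<Rightarrow> real. (\<Sum>i<n+l. g i) = (\<Sum>i<n. g i) + (\<Sum>j<l. g (n + j))"
    by (induction l) (simp_all add: add.assoc)
  have "dotp (n + l) (tilde_exp n l v \<alpha>) w =
      (\<Sum>i<n. ?a i * w i) + (\<Sum>j<l. (?a (n+j) + (\<Sum>c<n. ?a c * real_of_int (v j c))) * w (n + j))"
    unfolding dotp_def split by (simp add: lookup_T of_int_sum)
  also have "\<dots> = (\<Sum>i<n. ?a i * w i) + (\<Sum>j<l. ?a (n+j) * w (n+j)) +
      (\<Sum>j<l. \<Sum>c<n. ?a c * real_of_int (v j c) * w (n + j))"
    by (simp add: distrib_right sum.distrib sum_distrib_right)
  also have "\<dots> = (\<Sum>i<n. ?a i * (w i + (\<Sum>j<l. real_of_int (v j i) * w (n + j)))) + (\<Sum>j<l. ?a (n+j) * w (n+j))"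
    by (simp add: distrib_left sum.distrib sum_distrib_left sum.swap[of _ "{..<l}"] mult.assoc)
  also have "\<dots> = dotp (n + l) \<alpha> (Phi n l v w)"
    unfolding dotp_def split by (simp add: Phi_def)
  finally show ?thesis .
qed

definition tc :: "('a::zero \<Rightarrow> real) \<Rightarrow> nat \<Rightarrow> 'a lpoly \<Rightarrow> (nat \<Rightarrow> real) \<Rightarrow> bool" where
  "tc val N f w \<longleftrightarrow> f = 0 \<or>
     (\<exists>\<alpha>\<in>Poly_Mapping.keys f. \<exists>\<beta>\<in>Poly_Mapping.keys f. \<alpha> \<noteq> \<beta> \<and> tw val N f w \<alpha> = tw val N f w \<beta> \<and>
        (\<forall>\<gamma>\<in>Poly_Mapping.keys f. tw val N f w \<alpha> \<le> tw val N f w \<gamma>))"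

lemma trop_hyp_tc: "trop_hyp val N f = {w \<in> rspace N. tc val N f w}"
  by (simp add: trop_hyp_def tc_def)

lemma tc_transfer:
  fixes f g :: "'a::zero lpoly"
  assumes inj: "inj_on \<phi> (Poly_Mapping.keys f)"
    and keys: "Poly_Mapping.keys g = \<phi> ` Poly_Mapping.keys f"
    and look: "\<And>\<alpha>. \<alpha> \<in> Poly_Mapping.keys f \<Longrightarrow> Poly_Mapping.lookup g (\<phi> \<alpha>) = Poly_Mapping.lookup f \<alpha>"
    and dot: "\<And>\<alpha>. \<alpha> \<in> Poly_Mapping.keys f \<Longrightarrow> dotp N (\<phi> \<alpha>) w = dotp M \<alpha> w' + c"
  shows "tc val N g w \<longleftrightarrow> tc val M f w'"
proof -
  have twe: "tw val N g w (\<phi> \<alpha>) = tw val M f w' \<alpha> + c" if "\<alpha> \<in> Poly_Mapping.keys f" for \<alpha>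
    using look[OF that] dot[OF that] by (simp add: tw_def)
  have z: "g = 0 \<longleftrightarrow> f = 0"
    using keys by (metis image_is_empty keys_eq_empty)
  have "(\<exists>\<alpha>\<in>Poly_Mapping.keys g. \<exists>\<beta>\<in>Poly_Mapping.keys g. \<alpha> \<noteq> \<beta> \<and> tw val N g w \<alpha> = tw val N g w \<beta> \<and>
        (\<forall>\<gamma>\<in>Poly_Mapping.keys g. tw val N g w \<alpha> \<le> tw val N g w \<gamma>)) \<longleftrightarrow>
       (\<exists>\<alpha>\<in>Poly_Mapping.keys f. \<exists>\<beta>\<in>Poly_Mapping.keys f. \<phi> \<alpha> \<noteq> \<phi> \<beta> \<and> tw val N g w (\<phi> \<alpha>) = tw val N g w (\<phi> \<beta>) \<and>
        (\<forall>\<gamma>\<in>Poly_Mapping.keys f. tw val N g w (\<phi> \<alpha>) \<le> tw val N g w (\<phi> \<gamma>)))"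
    unfolding keys by simp
  also have "\<dots> \<longleftrightarrow> (\<exists>\<alpha>\<in>Poly_Mapping.keys f. \<exists>\<beta>\<in>Poly_Mapping.keys f. \<alpha> \<noteq> \<beta> \<and> tw val M f w' \<alpha> = tw val M f w' \<beta> \<and>
        (\<forall>\<gamma>\<in>Poly_Mapping.keys f. tw val M f w' \<alpha> \<le> tw val M f w' \<gamma>))"
    using inj twe by (auto simp: inj_on_eq_iff)
  finally show ?thesis unfolding tc_def z by simp
qed

lemma init_transfer:
  fixes f g :: "'a::zero lpoly"
  assumes inj: "inj_on \<phi> (Poly_Mapping.keys f)"
    and keys: "Poly_Mapping.keys g = \<phi> ` Poly_Mapping.keys f"
    and look: "\<And>\<alpha>. \<alpha> \<in> Poly_Mapping.keys f \<Longrightarrow> Poly_Mapping.lookup g (\<phi> \<alpha>) = Poly_Mapping.lookup f \<alpha>"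
    and dot: "\<And>\<alpha>. \<alpha> \<in> Poly_Mapping.keys f \<Longrightarrow> dotp N (\<phi> \<alpha>) w = dotp M \<alpha> w' + c"
  shows "init_set val N g w = \<phi> ` init_set val M f w'"
proof -
  have twe: "tw val N g w (\<phi> \<alpha>) = tw val M f w' \<alpha> + c" if "\<alpha> \<in> Poly_Mapping.keys f" for \<alpha>
    using look[OF that] dot[OF that] by (simp add: tw_def)
  show ?thesis unfolding init_set_def keys using twe by auto
qed

lemma tc_tilde: "tc val (n + l) (tilde n l v f) w \<longleftrightarrow> tc val (n + l) f (Phi n l v w)"
  by (rule tc_transfer[where \<phi>="tilde_exp n l v" and c=0])
     (simp_all add: keys_tilde lookup_tilde tinv_T dotp_T inj_on_def, metis tinv_T)

lemma init_tilde: "init_set val (n + l) (tilde n l v f) w = tilde_exp n l v ` init_set val (n + l) f (Phi n l v w)"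
  by (rule init_transfer[where \<phi>="tilde_exp n l v" and c=0])
     (simp_all add: keys_tilde lookup_tilde tinv_T dotp_T inj_on_def, metis tinv_T)

lemma dotp_trunc:
  assumes "\<forall>i\<ge>n. Poly_Mapping.lookup \<alpha> i = 0" "n \<le> N"
  shows "dotp N \<alpha> w = dotp n \<alpha> (trunc n w)"
proof -
  have "dotp N \<alpha> w = (\<Sum>i<n. real_of_int (Poly_Mapping.lookup \<alpha> i) * w i)"
    unfolding dotp_def using assms by (intro sum.mono_neutral_right) auto
  also have "\<dots> = dotp n \<alpha> (trunc n w)" unfolding dotp_def trunc_def by simp
  finally show ?thesis .
qed

lemma tc_trunc:
  assumes "lpoly_in p n f" "n \<le> N"
  shows "tc val N f w \<longleftrightarrow> tc val n f (trunc n w)"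
  by (rule tc_transfer[where \<phi>="\<lambda>x. x" and c=0]) (use assms in \<open>auto simp: lpoly_in_def intro!: dotp_trunc\<close>)

lemma init_trunc:
  assumes "lpoly_in p n f" "n \<le> N"
  shows "init_set val N f w = init_set val n f (trunc n w)"
  using init_transfer[where \<phi>="\<lambda>x. x" and c=0 and f=f and g=f and N=N and M=n and w=w and w'="trunc n w" and val=val]
  using assms by (auto simp: lpoly_in_def intro!: dotp_trunc)

lemma single_mult_pmk: fixes H :: "'a::comm_ring_1 lpoly" shows "Poly_Mapping.single \<mu> 1 * H = pmk (\<lambda>a. \<mu> + a) H"
proof -
  have "Poly_Mapping.single \<mu> 1 * H =
     Poly_Mapping.single \<mu> 1 * (\<Sum>\<alpha>\<in>Poly_Mapping.keys H. Poly_Mapping.single \<alpha> (Poly_Mapping.lookup H \<alpha>))"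
    by (subst monom_expand[of H]) simp
  also have "\<dots> = pmk (\<lambda>a. \<mu> + a) H" by (simp add: sum_distrib_left mult_single pmk_def)
  finally show ?thesis .
qed

lemma dotp_add: "dotp N (\<alpha> + \<beta>) w = dotp N \<alpha> w + dotp N \<beta> w"
  by (simp add: dotp_def lookup_add distrib_right sum.distrib)

lemma tc_shift:
  fixes H :: "'a::comm_ring_1 lpoly"
  shows "tc val N (Poly_Mapping.single \<mu> 1 * H) w \<longleftrightarrow> tc val N H w"
  unfolding single_mult_pmk
  by (rule tc_transfer[where \<phi>="\<lambda>a. \<mu> + a" and c="dotp N \<mu> w"])
     (simp_all add: keys_pmk[where \<psi>="\<lambda>a. - \<mu> + a"] lookup_pmk[where \<psi>="\<lambda>a. - \<mu> + a"] dotp_add inj_on_def)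

definition Phiinv :: "nat \<Rightarrow> nat \<Rightarrow> (nat \<Rightarrow> nat \<Rightarrow> int) \<Rightarrow> (nat \<Rightarrow> real) \<Rightarrow> (nat \<Rightarrow> real)" where
  "Phiinv n l v w = (\<lambda>i. if i < n then w i - (\<Sum>j<l. real_of_int (v j i) * w (n + j)) else w i)"

lemma Phi_Phiinv: "Phi n l v (Phiinv n l v w) = w"
  by (auto simp: Phi_def Phiinv_def fun_eq_iff)

lemma Phiinv_Phi: "Phiinv n l v (Phi n l v w) = w"
  by (auto simp: Phi_def Phiinv_def fun_eq_iff)

lemma linear_Phi: "linear (Phi n l v)"
  by (rule linearI) (auto simp: Phi_def scaleR_apply fun_eq_iff sum.distrib sum_distrib_left algebra_simps)

lemma linear_Phiinv: "linear (Phiinv n l v)"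
  by (rule linearI) (auto simp: Phiinv_def scaleR_apply fun_eq_iff sum.distrib sum_distrib_left algebra_simps)

lemma inj_Phiinv: "inj (Phiinv n l v)"
  by (metis Phi_Phiinv injI)

lemma Phi_rspace: "Phi n l v w \<in> rspace (n + l) \<longleftrightarrow> w \<in> rspace (n + l)"
  by (auto simp: Phi_def rspace_def)

lemma trop_hyp_tilde:
  assumes "lpoly_in p n f"
  shows "w \<in> trop_hyp val (n + l) (tilde n l v f) \<longleftrightarrow>
         w \<in> rspace (n + l) \<and> trunc n (Phi n l v w) \<in> trop_hyp val n f"
proof -
  have "tc val (n + l) (tilde n l v f) w \<longleftrightarrow> tc val n f (trunc n (Phi n l v w))"
    using tc_tilde tc_trunc[OF assms le_add1] by blast
  then show ?thesis by (simp add: trop_hyp_tc trunc_rspace)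
qed

lemma trop_inter_tilde_mem:
  assumes "\<forall>j\<in>J. lpoly_in p n (f j)"
  shows "w \<in> trop_inter val (n + l) (\<lambda>i. tilde n l v (f i)) J \<longleftrightarrow>
         w \<in> rspace (n + l) \<and> trunc n (Phi n l v w) \<in> trop_inter val n f J"
proof -
  have "(\<forall>j\<in>J. w \<in> trop_hyp val (n + l) (tilde n l v (f j))) \<longleftrightarrow>
        (w \<in> rspace (n + l) \<or> J = {}) \<and> (\<forall>j\<in>J. trunc n (Phi n l v w) \<in> trop_hyp val n (f j))"
    using assms trop_hyp_tilde[of p n _ w val l v] by blast
  then show ?thesis by (auto simp: trop_inter_def trunc_rspace)
qed

lemma trop_inter_tilde:
  assumes "\<forall>j\<in>J. lpoly_in p n (f j)"
  shows "trop_inter val (n + l) (\<lambda>i. tilde n l v (f i)) J =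
         Phiinv n l v ` {u \<in> rspace (n + l). trunc n u \<in> trop_inter val n f J}"
proof (intro set_eqI iffI)
  fix w assume "w \<in> trop_inter val (n + l) (\<lambda>i. tilde n l v (f i)) J"
  then have "w \<in> rspace (n + l)" "trunc n (Phi n l v w) \<in> trop_inter val n f J"
    using trop_inter_tilde_mem[OF assms] by auto
  then show "w \<in> Phiinv n l v ` {u \<in> rspace (n + l). trunc n u \<in> trop_inter val n f J}"
    using Phi_rspace by (intro image_eqI[of _ _ "Phi n l v w"]) (auto simp: Phiinv_Phi)
next
  fix w assume "w \<in> Phiinv n l v ` {u \<in> rspace (n + l). trunc n u \<in> trop_inter val n f J}"
  then obtain u where u: "u \<in> rspace (n + l)" "trunc n u \<in> trop_inter val n f J" "w = Phiinv n l v u" by auto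
  then have "Phi n l v w = u" by (simp add: Phi_Phiinv)
  then show "w \<in> trop_inter val (n + l) (\<lambda>i. tilde n l v (f i)) J"
    using u Phi_rspace[of n l v w] trop_inter_tilde_mem[OF assms] by auto
qed

lemma trop_inter_rspace: "trop_inter val N f J \<subseteq> rspace N"
  by (auto simp: trop_inter_def)

lemma proper_tilde:
  assumes lp: "\<forall>j\<in>J. lpoly_in p n (f j)" and cJ: "card J \<le> n"
    and pr: "proper_int val n f J"
  shows "proper_int val (n + l) (\<lambda>i. tilde n l v (f i)) J"
proof -
  define S where "S = trop_inter val n f J"
  have SN: "S \<subseteq> rspace n" by (simp add: S_def trop_inter_rspace)
  have pS: "pdim S = int n - int (card J)" using pr by (simp add: proper_int_def S_def)
  have "S \<noteq> {}"
  proof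
    assume "S = {}" then have "pdim S = -1" by (simp add: pdim_empty)
    then show False using pS cJ by simp
  qed
  have "pdim (trop_inter val (n + l) (\<lambda>i. tilde n l v (f i)) J) =
        pdim {u \<in> rspace (n + l). trunc n u \<in> S}"
    unfolding trop_inter_tilde[OF lp] S_def
    by (rule pdim_image[OF linear_Phiinv inj_Phiinv linear_Phi Phiinv_Phi])
  also have "\<dots> = pdim S + int l" by (rule pdim_prod[OF SN \<open>S \<noteq> {}\<close>])
  finally show ?thesis using pS by (simp add: proper_int_def)
qed

definition Emap :: "nat \<Rightarrow> nat \<Rightarrow> (nat \<Rightarrow> nat \<Rightarrow> int) \<Rightarrow> (nat \<Rightarrow> real) \<Rightarrow> (nat \<Rightarrow> real)" where
  "Emap n l v x = (\<lambda>i. x i + (if n \<le> i \<and> i < n + l then (\<Sum>c<n. x c * real_of_int (v (i - n) c)) else 0))"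

lemma linear_Emap: "linear (Emap n l v)"
  by (rule linearI) (auto simp: Emap_def scaleR_apply fun_eq_iff sum.distrib sum_distrib_left algebra_simps)

lemma inj_Emap: "inj (Emap n l v)"
proof (rule injI)
  fix x y assume eq: "Emap n l v x = Emap n l v y"
  have lt: "x i = y i" if "i < n" for i
    using fun_cong[OF eq, of i] that by (simp add: Emap_def)
  then have "(\<Sum>c<n. x c * real_of_int (v (i - n) c)) = (\<Sum>c<n. y c * real_of_int (v (i - n) c))" for i
    by (intro sum.cong) auto
  note s = this
  show "x = y"
  proof
    fix i show "x i = y i" using fun_cong[OF eq, of i] s[of i] by (auto simp: Emap_def split: if_splits)
  qed
qed

lemma expvec_T: "expvec (tilde_exp n l v \<alpha>) = Emap n l v (expvec \<alpha>)"
  by (auto simp: expvec_def Emap_def lookup_T fun_eq_iff of_int_sum)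

lemma expvec_T_img: "expvec ` tilde_exp n l v ` X = Emap n l v ` expvec ` X"
  by (simp add: image_image expvec_T)

lemma newton_tilde: "newton (tilde n l v f) = Emap n l v ` newton f"
  unfolding newton_def keys_tilde expvec_T_img
  by (rule convex_hull_linear_image[OF linear_Emap, symmetric])

lemma dual_tilde:
  assumes "lpoly_in p n f"
  shows "dual_cell val (n + l) (tilde n l v f) w = Emap n l v ` dual_cell val n f (trunc n (Phi n l v w))"
  unfolding dual_cell_def init_tilde init_trunc[OF assms le_add1] expvec_T_img
  by (rule convex_hull_linear_image[OF linear_Emap, symmetric])

lemma msum_cong: "(\<And>j. j \<in> J \<Longrightarrow> C j = C' j) \<Longrightarrow> msum J C = msum J C'"
  by (simp add: msum_def)

lemma msum_image:
  assumes lin: "linear L"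
  shows "msum J (\<lambda>j. L ` C j) = L ` msum J C"
proof (intro set_eqI iffI)
  fix y assume "y \<in> msum J (\<lambda>j. L ` C j)"
  then obtain x where x: "y = (\<Sum>j\<in>J. x j)" "\<forall>j\<in>J. x j \<in> L ` C j" by (auto simp: msum_def)
  then have "\<forall>j\<in>J. \<exists>z. z \<in> C j \<and> x j = L z" by blast
  then obtain z where z: "\<forall>j\<in>J. z j \<in> C j \<and> x j = L (z j)" by metis
  have "y = L (\<Sum>j\<in>J. z j)" using x(1) z by (simp add: linear_sum[OF lin])
  then show "y \<in> L ` msum J C" using z by (auto simp: msum_def)
next
  fix y assume "y \<in> L ` msum J C"
  then obtain x where x: "y = L (\<Sum>j\<in>J. x j)" "\<forall>j\<in>J. x j \<in> C j" by (auto simp: msum_def)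
  then show "y \<in> msum J (\<lambda>j. L ` C j)"
    by (auto simp: msum_def linear_sum[OF lin] intro!: exI[of _ "\<lambda>j. L (x j)"])
qed

lemma part_a:
  assumes fp: "\<forall>i<n - m. lpoly_in n n (f i)"
    and pr: "proper_int val n f {..<n - m}"
  shows "proper_int val (n + l) (\<lambda>i. tilde n l v (f i)) {..<n - m}"
  by (rule proper_tilde[OF _ _ pr]) (use fp in auto)

lemma part_b:
  assumes fp: "\<forall>i<k. lpoly_in n n (f i)" and kn: "k \<le> n"
    and tr: "transversal val n f k"
  shows "transversal val (n + l) (\<lambda>i. tilde n l v (f i)) k"
  unfolding transversal_def
proof (intro allI impI conjI)
  fix J assume J: "J \<subseteq> {..<k}" "2 \<le> card J"
  have lp: "\<forall>j\<in>J. lpoly_in n n (f j)" using J(1) fp by auto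
  have cJ: "card J \<le> n" using card_mono[OF _ J(1)] kn by simp
  have prJ: "proper_int val n f J" and tcJ: "transversal_cells val n f J"
    using tr J by (auto simp: transversal_def)
  show "proper_int val (n + l) (\<lambda>i. tilde n l v (f i)) J"
    by (rule proper_tilde[OF lp cJ prJ])
  show "transversal_cells val (n + l) (\<lambda>i. tilde n l v (f i)) J"
    unfolding transversal_cells_def
  proof
    fix w assume w: "w \<in> trop_inter val (n + l) (\<lambda>i. tilde n l v (f i)) J"
    define u where "u = trunc n (Phi n l v w)"
    have u: "u \<in> trop_inter val n f J" using w trop_inter_tilde_mem[OF lp] by (simp add: u_def)
    have dj: "dual_cell val (n + l) (tilde n l v (f j)) w = Emap n l v ` dual_cell val n (f j) u"
      if "j \<in> J" for j
      unfolding u_def by (rule dual_tilde) (use lp that in auto)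
    have "affdim (msum J (\<lambda>j. dual_cell val (n + l) (tilde n l v (f j)) w)) =
          affdim (msum J (\<lambda>j. Emap n l v ` dual_cell val n (f j) u))"
      using dj by (simp cong: msum_cong)
    also have "\<dots> = affdim (msum J (\<lambda>j. dual_cell val n (f j) u))"
      by (simp add: msum_image[OF linear_Emap] affdim_image[OF linear_Emap inj_Emap])
    also have "\<dots> = (\<Sum>j\<in>J. affdim (dual_cell val n (f j) u))"
      using tcJ u by (simp add: transversal_cells_def)
    also have "\<dots> = (\<Sum>j\<in>J. affdim (dual_cell val (n + l) (tilde n l v (f j)) w))"
      by (intro sum.cong refl) (simp add: dj affdim_image[OF linear_Emap inj_Emap])
    finally show "affdim (msum J (\<lambda>j. dual_cell val (n + l) (tilde n l v (f j)) w)) =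
          (\<Sum>j\<in>J. affdim (dual_cell val (n + l) (tilde n l v (f j)) w))" .
  qed
qed

lemma prod_power_int_distrib:
  fixes f :: "'b \<Rightarrow> 'a::field"
  shows "(\<Prod>i\<in>A. f i) powi k = (\<Prod>i\<in>A. f i powi k)"
  by (induction A rule: infinite_finite_induct) (simp_all add: power_int_mult_distrib)

lemma power_int_sum':
  fixes x :: "'a::field"
  assumes "x \<noteq> 0"
  shows "x powi (\<Sum>i\<in>A. g i) = (\<Prod>i\<in>A. x powi g i)"
  by (induction A rule: infinite_finite_induct) (simp_all add: power_int_add assms)

lemma lookup_restr: "Poly_Mapping.lookup (restr f A) \<alpha> = (if expvec \<alpha> \<in> A then Poly_Mapping.lookup f \<alpha> else 0)"
  by (auto simp: restr_def lookup_sum lookup_single when_def in_keys_iff)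

lemma restr_tilde:
  "restr (tilde n l v g) (Emap n l v ` A) = tilde n l v (restr g A)"
proof (rule poly_mapping_eqI)
  fix \<beta>
  have "expvec \<beta> = Emap n l v (expvec (tinv n l v \<beta>))"
    using expvec_T[of n l v "tinv n l v \<beta>"] by (simp add: T_tinv)
  then have "expvec \<beta> \<in> Emap n l v ` A \<longleftrightarrow> expvec (tinv n l v \<beta>) \<in> A"
    using inj_Emap by (simp add: inj_image_mem_iff)
  then show "Poly_Mapping.lookup (restr (tilde n l v g) (Emap n l v ` A)) \<beta> =
             Poly_Mapping.lookup (tilde n l v (restr g A)) \<beta>"
    by (simp add: lookup_restr lookup_tilde)
qed

lemma keys_restr: "Poly_Mapping.keys (restr f A) \<subseteq> Poly_Mapping.keys f"
  by (auto simp: in_keys_iff lookup_restr split: if_splits)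

lemma eval_tilde:
  fixes g :: "'a::comm_monoid_add lpoly" and z :: "nat \<Rightarrow> 'b::field"
  assumes g: "\<forall>\<alpha>\<in>Poly_Mapping.keys g. \<forall>i\<ge>n. Poly_Mapping.lookup \<alpha> i = 0"
    and z: "\<forall>j<l. z (n + j) \<noteq> 0"
  shows "eval_at emb (n + l) (tilde n l v g) z =
         eval_at emb n g (\<lambda>c. z c * (\<Prod>j<l. z (n + j) powi v j c))"
proof -
  have inj: "inj_on (tilde_exp n l v) X" for X by (metis inj_on_inverseI tinv_T)
  have mono: "(\<Prod>i<n + l. z i powi Poly_Mapping.lookup (tilde_exp n l v \<alpha>) i) =
        (\<Prod>c<n. (z c * (\<Prod>j<l. z (n + j) powi v j c)) powi Poly_Mapping.lookup \<alpha> c)"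
    if a: "\<alpha> \<in> Poly_Mapping.keys g" for \<alpha>
  proof -
    have a0: "Poly_Mapping.lookup \<alpha> (n + j) = 0" for j using g a by simp
    have split: "\<And>h :: nat \<Rightarrow> 'b. (\<Prod>i<n+l. h i) = (\<Prod>i<n. h i) * (\<Prod>j<l. h (n + j))"
      by (induction l) (simp_all add: add.assoc mult.assoc)
    have "(\<Prod>i<n + l. z i powi Poly_Mapping.lookup (tilde_exp n l v \<alpha>) i) =
          (\<Prod>i<n. z i powi Poly_Mapping.lookup \<alpha> i) *
          (\<Prod>j<l. z (n + j) powi (\<Sum>c<n. Poly_Mapping.lookup \<alpha> c * v j c))"
      unfolding split by (simp add: lookup_T a0)
    also have "\<dots> = (\<Prod>i<n. z i powi Poly_Mapping.lookup \<alpha> i) *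
          (\<Prod>j<l. \<Prod>c<n. (z (n + j) powi v j c) powi Poly_Mapping.lookup \<alpha> c)"
      using z by (simp add: power_int_sum' power_int_mult[symmetric] mult.commute)
    also have "\<dots> = (\<Prod>c<n. (z c * (\<Prod>j<l. z (n + j) powi v j c)) powi Poly_Mapping.lookup \<alpha> c)"
      by (simp add: power_int_mult_distrib prod_power_int_distrib prod.distrib prod.swap[of _ "{..<l}"])
    finally show ?thesis .
  qed
  have "eval_at emb (n + l) (tilde n l v g) z =
    (\<Sum>\<alpha>\<in>Poly_Mapping.keys g. emb (Poly_Mapping.lookup g \<alpha>) *
       (\<Prod>i<n + l. z i powi Poly_Mapping.lookup (tilde_exp n l v \<alpha>) i))"
    unfolding eval_at_def keys_tilde by (subst sum.reindex[OF inj]) (simp add: lookup_tilde tinv_T)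
  also have "\<dots> = eval_at emb n g (\<lambda>c. z c * (\<Prod>j<l. z (n + j) powi v j c))"
    unfolding eval_at_def by (intro sum.cong refl) (simp add: mono)
  finally show ?thesis .
qed

lemma part_c:
  fixes emb :: "'k::field \<Rightarrow> 'L::field" and f :: "nat \<Rightarrow> 'k lpoly"
  assumes fp: "\<forall>i<k. lpoly_in n n (f i)"
    and nd: "newton_nondeg emb n f k"
  shows "newton_nondeg emb (n + l) (\<lambda>i. tilde n l v (f i)) k"
  unfolding newton_nondeg_def
proof (intro allI impI)
  fix A' :: "nat \<Rightarrow> (nat \<Rightarrow> real) set"
  assume H: "(\<forall>i<k. A' i \<noteq> {} \<and> A' i face_of newton (tilde n l v (f i))) \<and>
      msum {..<k} A' face_of msum {..<k} (\<lambda>i. newton (tilde n l v (f i))) \<and>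
      affdim (msum {..<k} A') \<le> int k - 1"
  let ?E = "Emap n l v"
  define A where "A i = {x. ?E x \<in> A' i}" for i
  have EA: "?E ` A i = A' i" if "i < k" for i
  proof -
    have "A' i \<subseteq> ?E ` newton (f i)"
      using H that face_of_imp_subset newton_tilde by metis
    then show ?thesis by (auto simp: A_def)
  qed
  have ms1: "msum {..<k} A' = ?E ` msum {..<k} A"
  proof -
    have "msum {..<k} A' = msum {..<k} (\<lambda>j. ?E ` A j)"
      by (rule msum_cong) (simp add: EA)
    then show ?thesis by (simp add: msum_image[OF linear_Emap])
  qed
  have ms2: "msum {..<k} (\<lambda>i. newton (tilde n l v (f i))) = ?E ` msum {..<k} (\<lambda>i. newton (f i))"
    by (simp add: newton_tilde msum_image[OF linear_Emap, symmetric])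
  have Ai: "A i \<noteq> {} \<and> A i face_of newton (f i)" if "i < k" for i
  proof
    show "A i \<noteq> {}" using H EA[OF that] that by auto
    have "?E ` A i face_of ?E ` newton (f i)" using H EA[OF that] that newton_tilde by metis
    then show "A i face_of newton (f i)" by (simp add: face_of_linear_image[OF linear_Emap inj_Emap])
  qed
  have mf: "msum {..<k} A face_of msum {..<k} (\<lambda>i. newton (f i))"
    using H ms1 ms2 by (simp add: face_of_linear_image[OF linear_Emap inj_Emap])
  have ad: "affdim (msum {..<k} A) \<le> int k - 1"
    using H ms1 by (simp add: affdim_image[OF linear_Emap inj_Emap])
  have noz: "\<not> (\<exists>z. (\<forall>i<n. z i \<noteq> 0) \<and> (\<forall>i<k. eval_at emb n (restr (f i) (A i)) z = 0))"
    using nd Ai mf ad unfolding newton_nondeg_def by blast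
  show "\<not> (\<exists>z. (\<forall>i<n + l. z i \<noteq> 0) \<and>
          (\<forall>i<k. eval_at emb (n + l) (restr (tilde n l v (f i)) (A' i)) z = 0))"
  proof
    assume "\<exists>z. (\<forall>i<n + l. z i \<noteq> 0) \<and>
          (\<forall>i<k. eval_at emb (n + l) (restr (tilde n l v (f i)) (A' i)) z = 0)"
    then obtain z where z: "\<forall>i<n + l. z i \<noteq> 0"
      "\<forall>i<k. eval_at emb (n + l) (restr (tilde n l v (f i)) (A' i)) z = 0" by blast
    define zz where "zz = (\<lambda>c. z c * (\<Prod>j<l. z (n + j) powi v j c))"
    have zl: "\<forall>j<l. z (n + j) \<noteq> 0" using z(1) by simp
    have "\<forall>i<n. zz i \<noteq> 0" using z(1) by (simp add: zz_def)
    moreover have "\<forall>i<k. eval_at emb n (restr (f i) (A i)) zz = 0"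
    proof (intro allI impI)
      fix i assume i: "i < k"
      have g: "\<forall>\<alpha>\<in>Poly_Mapping.keys (restr (f i) (A i)). \<forall>j\<ge>n. Poly_Mapping.lookup \<alpha> j = 0"
        using fp i keys_restr[of "f i" "A i"] by (auto simp: lpoly_in_def)
      have "eval_at emb n (restr (f i) (A i)) zz = eval_at emb (n + l) (tilde n l v (restr (f i) (A i))) z"
        unfolding zz_def by (rule eval_tilde[OF g zl, symmetric])
      also have "\<dots> = eval_at emb (n + l) (restr (tilde n l v (f i)) (A' i)) z"
        using EA[OF i] restr_tilde by metis
      finally show "eval_at emb n (restr (f i) (A i)) zz = 0" using z(2) i by simp
    qed
    ultimately show False using noz by blast
  qed
qed

definition lp :: "nat \<Rightarrow> nat \<Rightarrow> (nat \<Rightarrow>\<^sub>0 int) \<Rightarrow> (nat \<Rightarrow>\<^sub>0 int)" where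
  "lp n l \<alpha> = (\<Sum>i\<in>{n..<n+l}. Poly_Mapping.single i (Poly_Mapping.lookup \<alpha> i))"

lemma lookup_lp: "Poly_Mapping.lookup (lp n l \<alpha>) i = (if n \<le> i \<and> i < n + l then Poly_Mapping.lookup \<alpha> i else 0)"
  by (auto simp: lp_def lookup_sum lookup_single when_def)

lemma lp_add: "lp n l (\<alpha> + \<beta>) = lp n l \<alpha> + lp n l \<beta>"
  by (rule poly_mapping_eqI) (simp add: lookup_lp lookup_add)

lemma lp_zero: "\<forall>i\<ge>n. Poly_Mapping.lookup \<alpha> i = 0 \<Longrightarrow> lp n l \<alpha> = 0"
  by (rule poly_mapping_eqI) (simp add: lookup_lp)

definition proj :: "nat \<Rightarrow> nat \<Rightarrow> (nat \<Rightarrow>\<^sub>0 int) \<Rightarrow> 'a::comm_ring_1 lpoly \<Rightarrow> 'a lpoly" where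
  "proj n l \<mu> p = (\<Sum>\<alpha>\<in>Poly_Mapping.keys p. if lp n l \<alpha> = \<mu> then Poly_Mapping.single \<alpha> (Poly_Mapping.lookup p \<alpha>) else 0)"

lemma lookup_proj: "Poly_Mapping.lookup (proj n l \<mu> p) \<beta> = (if lp n l \<beta> = \<mu> then Poly_Mapping.lookup p \<beta> else 0)"
proof -
  have "Poly_Mapping.lookup (proj n l \<mu> p) \<beta> =
     (\<Sum>\<alpha>\<in>Poly_Mapping.keys p. if \<alpha> = \<beta> then (if lp n l \<alpha> = \<mu> then Poly_Mapping.lookup p \<alpha> else 0) else 0)"
    unfolding proj_def lookup_sum
  proof (rule sum.cong[OF refl])
    fix \<alpha> show "Poly_Mapping.lookup (if lp n l \<alpha> = \<mu> then Poly_Mapping.single \<alpha> (Poly_Mapping.lookup p \<alpha>) else 0) \<beta> =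
      (if \<alpha> = \<beta> then (if lp n l \<alpha> = \<mu> then Poly_Mapping.lookup p \<alpha> else 0) else 0)"
      by (cases "lp n l \<alpha> = \<mu>"; cases "\<alpha> = \<beta>") (simp_all add: lookup_single when_def)
  qed
  also have "\<dots> = (if \<beta> \<in> Poly_Mapping.keys p then (if lp n l \<beta> = \<mu> then Poly_Mapping.lookup p \<beta> else 0) else 0)"
    by (rule sum.delta[OF finite_keys])
  also have "\<dots> = (if lp n l \<beta> = \<mu> then Poly_Mapping.lookup p \<beta> else 0)"
    by (simp add: in_keys_iff)
  finally show ?thesis .
qed

lemma proj_sum: "proj n l \<mu> (\<Sum>i\<in>I. F i) = (\<Sum>i\<in>I. proj n l \<mu> (F i))"
  by (rule poly_mapping_eqI) (simp add: lookup_proj lookup_sum)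

lemma proj_single: "proj n l \<mu> (Poly_Mapping.single a c) = (if lp n l a = \<mu> then Poly_Mapping.single a c else 0)"
  by (rule poly_mapping_eqI) (auto simp: lookup_proj lookup_single when_def)

lemma proj_mult:
  fixes p q :: "'a::comm_ring_1 lpoly"
  assumes q: "\<forall>b\<in>Poly_Mapping.keys q. lp n l b = 0"
  shows "proj n l \<mu> (p * q) = proj n l \<mu> p * q"
proof -
  let ?F = "\<lambda>a. Poly_Mapping.single a (Poly_Mapping.lookup p a)"
  let ?G = "\<lambda>b. Poly_Mapping.single b (Poly_Mapping.lookup q b)"
  have "p * q = (\<Sum>a\<in>Poly_Mapping.keys p. \<Sum>b\<in>Poly_Mapping.keys q. ?F a * ?G b)"
    by (subst monom_expand[of p], subst monom_expand[of q]) (simp add: sum_product)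
  then have "proj n l \<mu> (p * q) = (\<Sum>a\<in>Poly_Mapping.keys p. \<Sum>b\<in>Poly_Mapping.keys q. proj n l \<mu> (?F a * ?G b))"
    by (simp add: proj_sum)
  also have "\<dots> = (\<Sum>a\<in>Poly_Mapping.keys p. \<Sum>b\<in>Poly_Mapping.keys q. (if lp n l a = \<mu> then ?F a else 0) * ?G b)"
    by (intro sum.cong refl) (simp add: mult_single proj_single lp_add q)
  also have "\<dots> = (\<Sum>a\<in>Poly_Mapping.keys p. (if lp n l a = \<mu> then ?F a else 0)) * q"
    by (subst monom_expand[of q]) (simp add: sum_product)
  also have "(\<Sum>a\<in>Poly_Mapping.keys p. (if lp n l a = \<mu> then ?F a else 0)) = proj n l \<mu> p"
    by (simp add: proj_def)
  finally show ?thesis .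
qed

lemma keys_mult_sub:
  fixes p q :: "'a::comm_ring_1 lpoly"
  shows "Poly_Mapping.keys (p * q) \<subseteq> {a + b | a b. a \<in> Poly_Mapping.keys p \<and> b \<in> Poly_Mapping.keys q}"
proof -
  have "p * q = (\<Sum>a\<in>Poly_Mapping.keys p. Poly_Mapping.single a (Poly_Mapping.lookup p a)) *
      (\<Sum>b\<in>Poly_Mapping.keys q. Poly_Mapping.single b (Poly_Mapping.lookup q b))"
    by (simp only: monom_expand[symmetric])
  also have "\<dots> = (\<Sum>a\<in>Poly_Mapping.keys p. \<Sum>b\<in>Poly_Mapping.keys q.
      Poly_Mapping.single (a + b) (Poly_Mapping.lookup p a * Poly_Mapping.lookup q b))"
    by (simp add: sum_product mult_single)
  also have "Poly_Mapping.keys \<dots> \<subseteq> {a + b | a b. a \<in> Poly_Mapping.keys p \<and> b \<in> Poly_Mapping.keys q}"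
  proof
    fix x assume x: "x \<in> Poly_Mapping.keys (\<Sum>a\<in>Poly_Mapping.keys p. \<Sum>b\<in>Poly_Mapping.keys q.
      Poly_Mapping.single (a + b) (Poly_Mapping.lookup p a * Poly_Mapping.lookup q b))"
    obtain a where a: "a \<in> Poly_Mapping.keys p" and xa: "x \<in> Poly_Mapping.keys (\<Sum>b\<in>Poly_Mapping.keys q.
      Poly_Mapping.single (a + b) (Poly_Mapping.lookup p a * Poly_Mapping.lookup q b))"
      using subsetD[OF keys_sum x] by (rule UN_E)
    obtain b where b: "b \<in> Poly_Mapping.keys q" and xb: "x \<in> Poly_Mapping.keys
      (Poly_Mapping.single (a + b) (Poly_Mapping.lookup p a * Poly_Mapping.lookup q b))"
      using subsetD[OF keys_sum xa] by (rule UN_E)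
    have "x = a + b" using xb by (simp split: if_splits)
    then show "x \<in> {a + b | a b. a \<in> Poly_Mapping.keys p \<and> b \<in> Poly_Mapping.keys q}"
      using a b by blast
  qed
  finally show ?thesis .
qed

lemma keys_sum_mult_supp:
  fixes G f :: "nat \<Rightarrow> 'a::comm_ring_1 lpoly"
  assumes "\<forall>i<k. \<forall>\<alpha>\<in>Poly_Mapping.keys (G i). \<forall>j\<ge>N. Poly_Mapping.lookup \<alpha> j = 0"
    and "\<forall>i<k. \<forall>\<alpha>\<in>Poly_Mapping.keys (f i). \<forall>j\<ge>N. Poly_Mapping.lookup \<alpha> j = 0"
  shows "\<forall>\<alpha>\<in>Poly_Mapping.keys (\<Sum>i<k. G i * f i). \<forall>j\<ge>N. Poly_Mapping.lookup \<alpha> j = 0"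
proof (intro ballI allI impI)
  fix \<alpha> j assume a: "\<alpha> \<in> Poly_Mapping.keys (\<Sum>i<k. G i * f i)" and j: "N \<le> j"
  obtain i where i: "i \<in> {..<k}" and ai: "\<alpha> \<in> Poly_Mapping.keys (G i * f i)"
    using subsetD[OF keys_sum a] by (rule UN_E)
  have "\<alpha> \<in> {a + b | a b. a \<in> Poly_Mapping.keys (G i) \<and> b \<in> Poly_Mapping.keys (f i)}"
    using subsetD[OF keys_mult_sub ai] .
  then obtain a b where ab: "\<alpha> = a + b" "a \<in> Poly_Mapping.keys (G i)" "b \<in> Poly_Mapping.keys (f i)"
    by blast
  have ik: "i < k" using i by simp
  have "Poly_Mapping.lookup a j = 0" using assms(1) ik ab(2) j by blast
  moreover have "Poly_Mapping.lookup b j = 0" using assms(2) ik ab(3) j by blast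
  ultimately show "Poly_Mapping.lookup \<alpha> j = 0" using ab(1) by (simp add: lookup_add)
qed

lemma block:
  fixes f G :: "nat \<Rightarrow> 'a::comm_ring_1 lpoly"
  assumes fp: "\<forall>i<k. lpoly_in n n (f i)"
    and Gp: "\<forall>i<k. lpoly_in n (n + l) (G i)"
    and hyp: "\<forall>H\<in>gen_ideal n n f k. tc val n H (trunc n u)"
  shows "tc val (n + l) (\<Sum>i<k. G i * f i) u"
proof (rule ccontr)
  define h where "h = (\<Sum>i<k. G i * f i)"
  assume ntc: "\<not> tc val (n + l) (\<Sum>i<k. G i * f i) u"
  then have ntc': "\<not> tc val (n + l) h u" by (simp add: h_def)
  let ?tw = "tw val (n + l) h u"
  have h0: "h \<noteq> 0" using ntc' by (auto simp: tc_def)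
  then have kne: "Poly_Mapping.keys h \<noteq> {}" by simp
  obtain \<beta>0 where b0: "\<beta>0 \<in> Poly_Mapping.keys h" "?tw \<beta>0 = Min (?tw ` Poly_Mapping.keys h)"
  proof -
    have "Min (?tw ` Poly_Mapping.keys h) \<in> ?tw ` Poly_Mapping.keys h"
      using kne by (intro Min_in) auto
    then obtain x where "x \<in> Poly_Mapping.keys h" "Min (?tw ` Poly_Mapping.keys h) = ?tw x"
      by (rule imageE)
    then show ?thesis using that by simp
  qed
  have b0min: "\<forall>\<gamma>\<in>Poly_Mapping.keys h. ?tw \<beta>0 \<le> ?tw \<gamma>" using b0(2) by simp
  have strict: "\<forall>\<gamma>\<in>Poly_Mapping.keys h. \<gamma> \<noteq> \<beta>0 \<longrightarrow> ?tw \<beta>0 < ?tw \<gamma>"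
  proof (intro ballI impI)
    fix \<gamma> assume g: "\<gamma> \<in> Poly_Mapping.keys h" "\<gamma> \<noteq> \<beta>0"
    have "?tw \<beta>0 \<noteq> ?tw \<gamma>" using ntc' b0(1) b0min g unfolding tc_def by metis
    then show "?tw \<beta>0 < ?tw \<gamma>" using b0min g by force
  qed
  define \<mu> where "\<mu> = lp n l \<beta>0"
  have flp: "\<forall>b\<in>Poly_Mapping.keys (f i). lp n l b = 0" if "i < k" for i
    using fp that by (auto simp: lpoly_in_def intro!: lp_zero)
  define P where "P = proj n l \<mu> h"
  have P_eq: "P = (\<Sum>i<k. proj n l \<mu> (G i) * f i)"
    unfolding P_def h_def proj_sum by (intro sum.cong refl proj_mult) (use flp in auto)
  define Hi where "Hi i = Poly_Mapping.single (- \<mu>) 1 * proj n l \<mu> (G i)" for i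
  define H where "H = (\<Sum>i<k. Hi i * f i)"
  have PH: "P = Poly_Mapping.single \<mu> 1 * H"
  proof -
    have "Poly_Mapping.single \<mu> 1 * Hi i = proj n l \<mu> (G i)" for i
      by (simp add: Hi_def mult.assoc[symmetric] mult_single)
    then show ?thesis by (simp add: P_eq H_def sum_distrib_left mult.assoc[symmetric])
  qed
  have mu_lt: "Poly_Mapping.lookup \<mu> i = 0" if "i < n \<or> n + l \<le> i" for i
    using that by (auto simp: \<mu>_def lookup_lp)
  have Hi_p: "lpoly_in n n (Hi i)" if i: "i < k" for i
  proof -
    have ks: "Poly_Mapping.keys (Hi i) = (\<lambda>a. - \<mu> + a) ` Poly_Mapping.keys (proj n l \<mu> (G i))"
      unfolding Hi_def single_mult_pmk by (rule keys_pmk[where \<psi>="\<lambda>a. \<mu> + a"]) simp_all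
    show ?thesis unfolding lpoly_in_def ks
    proof (intro ballI conjI allI impI)
      fix \<gamma> assume "\<gamma> \<in> (\<lambda>a. - \<mu> + a) ` Poly_Mapping.keys (proj n l \<mu> (G i))"
      then obtain a where a: "\<gamma> = - \<mu> + a" "a \<in> Poly_Mapping.keys (proj n l \<mu> (G i))" by auto
      then have aG: "a \<in> Poly_Mapping.keys (G i)" and la: "lp n l a = \<mu>"
        by (auto simp: in_keys_iff lookup_proj split: if_splits)
      have ga: "\<forall>j<n. 0 \<le> Poly_Mapping.lookup a j" "\<forall>j\<ge>n + l. Poly_Mapping.lookup a j = 0"
        using Gp i aG by (auto simp: lpoly_in_def)
      fix j
      show "j < n \<Longrightarrow> 0 \<le> Poly_Mapping.lookup \<gamma> j" using ga mu_lt[of j] a(1) by (simp add: lookup_add lookup_minus)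
      show "n \<le> j \<Longrightarrow> Poly_Mapping.lookup \<gamma> j = 0"
      proof -
        assume j: "n \<le> j"
        show ?thesis
        proof (cases "j < n + l")
          case True
          have "Poly_Mapping.lookup \<mu> j = Poly_Mapping.lookup a j"
            using la True j by (metis lookup_lp)
          then show ?thesis using a(1) by (simp add: lookup_add lookup_minus)
        next
          case False
          then show ?thesis using a(1) ga mu_lt[of j] by (simp add: lookup_add lookup_minus)
        qed
      qed
    qed
  qed
  have Hid: "H \<in> gen_ideal n n f k" unfolding gen_ideal_def H_def using Hi_p by blast
  have Hsupp: "lpoly_in 0 n H"
  proof -
    have "\<forall>\<alpha>\<in>Poly_Mapping.keys (\<Sum>i<k. Hi i * f i). \<forall>j\<ge>n. Poly_Mapping.lookup \<alpha> j = 0"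
      by (rule keys_sum_mult_supp) (use Hi_p fp in \<open>auto simp: lpoly_in_def\<close>)
    then show ?thesis by (simp add: lpoly_in_def H_def)
  qed
  have "tc val n H (trunc n u)" using hyp Hid by blast
  then have "tc val (n + l) H u" using tc_trunc[OF Hsupp le_add1] by blast
  then have tcP: "tc val (n + l) P u" unfolding PH by (simp add: tc_shift)
  have lkP: "Poly_Mapping.lookup P \<beta> = (if lp n l \<beta> = \<mu> then Poly_Mapping.lookup h \<beta> else 0)" for \<beta>
    by (simp add: P_def lookup_proj)
  have kP: "Poly_Mapping.keys P \<subseteq> Poly_Mapping.keys h" by (auto simp: in_keys_iff lkP split: if_splits)
  have b0P: "\<beta>0 \<in> Poly_Mapping.keys P" using b0(1) by (simp add: in_keys_iff lkP \<mu>_def)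
  have twP: "tw val (n + l) P u \<beta> = ?tw \<beta>" if "\<beta> \<in> Poly_Mapping.keys P" for \<beta>
    using that by (auto simp: tw_def lkP in_keys_iff split: if_splits)
  have "P \<noteq> 0" using b0P by auto
  then obtain \<alpha> \<beta> where ab: "\<alpha> \<in> Poly_Mapping.keys P" "\<beta> \<in> Poly_Mapping.keys P" "\<alpha> \<noteq> \<beta>"
    "tw val (n + l) P u \<alpha> = tw val (n + l) P u \<beta>"
    "\<forall>\<gamma>\<in>Poly_Mapping.keys P. tw val (n + l) P u \<alpha> \<le> tw val (n + l) P u \<gamma>"
    using tcP unfolding tc_def by blast
  have "?tw \<alpha> \<le> ?tw \<beta>0" using ab(1,5) b0P twP by metis
  then have "\<alpha> = \<beta>0" using strict ab(1) kP by force
  moreover have "?tw \<beta> = ?tw \<alpha>" using ab twP by metis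
  ultimately show False using strict ab(2,3) kP by force
qed

lemma lpoly_utilde:
  assumes "lpoly_in n (n + l) g"
  shows "lpoly_in n (n + l) (pmk (tinv n l v) g)"
proof -
  have ks: "Poly_Mapping.keys (pmk (tinv n l v) g) = tinv n l v ` Poly_Mapping.keys g"
    by (rule keys_pmk[where \<psi>="tilde_exp n l v"]) (simp_all add: tinv_T T_tinv)
  show ?thesis unfolding lpoly_in_def ks
  proof (intro ballI conjI allI impI)
    fix \<gamma> assume "\<gamma> \<in> tinv n l v ` Poly_Mapping.keys g"
    then obtain a where a: "\<gamma> = tinv n l v a" "a \<in> Poly_Mapping.keys g" by auto
    have ga: "\<forall>j<n. 0 \<le> Poly_Mapping.lookup a j" "\<forall>j\<ge>n + l. Poly_Mapping.lookup a j = 0"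
      using assms a(2) by (auto simp: lpoly_in_def)
    fix j
    show "j < n \<Longrightarrow> 0 \<le> Poly_Mapping.lookup \<gamma> j"
      using ga a(1) by (simp add: tinv_def lookup_minus lookup_sx)
    show "n + l \<le> j \<Longrightarrow> Poly_Mapping.lookup \<gamma> j = 0"
      using ga a(1) by (simp add: tinv_def lookup_minus lookup_sx)
  qed
qed

lemma lpoly_one: "lpoly_in p N (1 :: 'a::comm_ring_1 lpoly)"
  by (simp add: lpoly_in_def)

lemma lpoly_zero: "lpoly_in p N (0 :: 'a::comm_ring_1 lpoly)"
  by (simp add: lpoly_in_def)

lemma part_d:
  fixes val :: "'k::field \<Rightarrow> real" and f :: "nat \<Rightarrow> 'k lpoly"
  assumes fp: "\<forall>i<k. lpoly_in n n (f i)" and kn: "k \<le> n"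
    and comp: "complete_int val n n f k"
  shows "complete_int val n (n + l) (\<lambda>i. tilde n l v (f i)) k"
  unfolding complete_int_def
proof
  have lp: "\<forall>j\<in>{..<k}. lpoly_in n n (f j)" using fp by auto
  show "proper_int val (n + l) (\<lambda>i. tilde n l v (f i)) {..<k}"
    by (rule proper_tilde[OF lp]) (use kn comp in \<open>auto simp: complete_int_def\<close>)
  have eqn: "trop_var val n (gen_ideal n n f k) = trop_inter val n f {..<k}"
    using comp by (simp add: complete_int_def)
  show "trop_var val (n + l) (gen_ideal n (n + l) (\<lambda>i. tilde n l v (f i)) k) =
        trop_inter val (n + l) (\<lambda>i. tilde n l v (f i)) {..<k}"
  proof (intro set_eqI iffI)
    fix w assume w: "w \<in> trop_var val (n + l) (gen_ideal n (n + l) (\<lambda>i. tilde n l v (f i)) k)"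
    have "tilde n l v (f j) \<in> gen_ideal n (n + l) (\<lambda>i. tilde n l v (f i)) k" if j: "j < k" for j
    proof -
      have "(\<Sum>i<k. (if i = j then 1 else 0) * tilde n l v (f i)) = tilde n l v (f j)"
        using j by (simp add: if_distrib[of "\<lambda>x. x * _"] cong: if_cong)
      moreover have "\<forall>i<k. lpoly_in n (n + l) (if i = j then 1 else (0 :: 'k lpoly))"
        by (simp add: lpoly_one lpoly_zero)
      ultimately show ?thesis unfolding gen_ideal_def by (intro CollectI exI[of _ "\<lambda>i. if i = j then 1 else 0"]) auto
    qed
    then show "w \<in> trop_inter val (n + l) (\<lambda>i. tilde n l v (f i)) {..<k}"
      using w by (auto simp: trop_var_def trop_inter_def)
  next
    fix w assume w: "w \<in> trop_inter val (n + l) (\<lambda>i. tilde n l v (f i)) {..<k}"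
    have wN: "w \<in> rspace (n + l)" and tw: "trunc n (Phi n l v w) \<in> trop_inter val n f {..<k}"
      using w trop_inter_tilde_mem[OF lp] by auto
    have hyp: "\<forall>H\<in>gen_ideal n n f k. tc val n H (trunc n (Phi n l v w))"
      using tw eqn by (auto simp: trop_var_def trop_hyp_tc)
    have "w \<in> trop_hyp val (n + l) h" if h: "h \<in> gen_ideal n (n + l) (\<lambda>i. tilde n l v (f i)) k" for h
    proof -
      obtain g where g: "h = (\<Sum>i<k. g i * tilde n l v (f i))" "\<forall>i<k. lpoly_in n (n + l) (g i)"
        using h by (auto simp: gen_ideal_def)
      define G where "G i = pmk (tinv n l v) (g i)" for i
      have inv1: "\<And>a. tinv n l v (tilde_exp n l v a) = a" and inv2: "\<And>b. tilde_exp n l v (tinv n l v b) = b"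
        by (simp_all add: tinv_T T_tinv)
      have tG: "tilde n l v (G i) = g i" for i
        unfolding G_def tilde_pmk by (rule pmk_comp[OF inv1 inv2])
      have "h = tilde n l v (\<Sum>i<k. G i * f i)"
        unfolding g(1) tilde_pmk pmk_sum[OF inv1 inv2] pmk_mult[OF inv1 inv2 T_add]
        using tG by (simp add: tilde_pmk)
      moreover have "tc val (n + l) (\<Sum>i<k. G i * f i) (Phi n l v w)"
        by (rule block[OF fp _ hyp]) (use g(2) in \<open>auto simp: G_def intro!: lpoly_utilde\<close>)
      ultimately have "tc val (n + l) h w" by (simp add: tc_tilde)
      then show ?thesis using wN by (simp add: trop_hyp_tc)
    qed
    then show "w \<in> trop_var val (n + l) (gen_ideal n (n + l) (\<lambda>i. tilde n l v (f i)) k)"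
      using wN by (simp add: trop_var_def)
  qed
qed

theorem lemma3p3:
  fixes val :: "'k::field \<Rightarrow> real"
    and emb :: "'k \<Rightarrow> 'L::field"
    and n m l :: nat
    and A :: "nat \<Rightarrow> nat \<Rightarrow> real"
    and v :: "nat \<Rightarrow> nat \<Rightarrow> int"
    and f :: "nat \<Rightarrow> 'k lpoly"
  assumes val: "real_valuation val"
    and clos: "alg_closure_emb emb"
    and A_rat: "\<forall>r<Suc m. \<forall>c<n. A r c \<in> \<rat>"
    and A_rank: "\<forall>y. \<exists>x. \<forall>r<Suc m. (\<Sum>c<n. A r c * x c) = y r"
    and l_def: "l = n - m - 1"
    and v_span: "{x \<in> rspace n. \<forall>r<Suc m. (\<Sum>c<n. A r c * x c) = 0} =
                 {(\<lambda>i. if i < n then (\<Sum>j<l. t j * real_of_int (v j i)) else 0) | t. True}"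
    and f_poly: "\<forall>i<n - m. lpoly_in n n (f i)"
  shows
    "(proper_int val n f {..<n - m} \<longrightarrow>
        proper_int val (n + l) (\<lambda>i. tilde n l v (f i)) {..<n - m}) \<and>
     (transversal val n f (n - m) \<longrightarrow>
        transversal val (n + l) (\<lambda>i. tilde n l v (f i)) (n - m)) \<and>
     (newton_nondeg emb n f (n - m) \<longrightarrow>
        newton_nondeg emb (n + l) (\<lambda>i. tilde n l v (f i)) (n - m)) \<and>
     (complete_int val n n f (n - m) \<longrightarrow>
        complete_int val n (n + l) (\<lambda>i. tilde n l v (f i)) (n - m))"
proof -
  have kn: "n - m \<le> n" by simp
  show ?thesis
    using part_a[OF f_poly, of val l v] part_b[OF f_poly kn, of val l v]
      part_c[OF f_poly, of emb l v] part_d[OF f_poly kn, of val l v]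
    by blast
qed

end
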